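(* Let $A$ be a $k$-algebra and let $\psi:P_\bullet\to P'_\bullet$ be an injective chain map of $A$-bimodule resolutions of $A$ lifting the identity map on $A$. If $P'_n/\operatorname{Im}\psi_n$ is projective as an $A$-bimodule for each $n$, then there exists a chain map $\psi':P'_\bullet\to P_\bullet$ (lifting the identity on $A$) with $\psi'\psi=1_P$. If $A$ is a graded algebra with $P_\bullet,P'_\bullet$ graded resolutions and $\psi$ a graded map, then $\psi'$ can be chosen to be graded.
   Context: A bimodule resolution of $A$ is a complex $P_\bullet$ ($n\ge0$) of $A$-bimodules with bimodule differentials and an augmentation $P_0\to A$ such that the augmented complex is exact. A chain map lifting the identity on $A$ is a chain map of bimodule complexes commuting with the augmentations. *)

theory Defs
  imports Main
begin

text \<open>A bimodule is given by an explicit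
  carrier set with its operations (so that different bimodules may share a type).\<close>

definition k_algebra :: "('k::field \<Rightarrow> 'a::ring_1) \<Rightarrow> bool" where
  "k_algebra alg \<longleftrightarrow> alg 1 = 1 \<and> (\<forall>x y. alg (x + y) = alg x + alg y)
     \<and> (\<forall>x y. alg (x * y) = alg x * alg y) \<and> (\<forall>c a. alg c * a = a * alg c)"

record ('a, 'm) bimod =
  bcar :: "'m set"
  bzero :: 'm
  badd :: "'m \<Rightarrow> 'm \<Rightarrow> 'm"
  bneg :: "'m \<Rightarrow> 'm"
  blact :: "'a \<Rightarrow> 'm \<Rightarrow> 'm"
  bract :: "'m \<Rightarrow> 'a \<Rightarrow> 'm"

definition bimodule :: "('k::field \<Rightarrow> 'a::ring_1) \<Rightarrow> ('a, 'm) bimod \<Rightarrow> bool" where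
  "bimodule alg M \<longleftrightarrow>
     bzero M \<in> bcar M
   \<and> (\<forall>x\<in>bcar M. \<forall>y\<in>bcar M. badd M x y \<in> bcar M)
   \<and> (\<forall>x\<in>bcar M. bneg M x \<in> bcar M)
   \<and> (\<forall>a. \<forall>x\<in>bcar M. blact M a x \<in> bcar M)
   \<and> (\<forall>a. \<forall>x\<in>bcar M. bract M x a \<in> bcar M)
   \<and> (\<forall>x\<in>bcar M. \<forall>y\<in>bcar M. \<forall>z\<in>bcar M. badd M (badd M x y) z = badd M x (badd M y z))
   \<and> (\<forall>x\<in>bcar M. \<forall>y\<in>bcar M. badd M x y = badd M y x)
   \<and> (\<forall>x\<in>bcar M. badd M (bzero M) x = x)
   \<and> (\<forall>x\<in>bcar M. badd M (bneg M x) x = bzero M)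
   \<and> (\<forall>x\<in>bcar M. blact M 1 x = x)
   \<and> (\<forall>a b. \<forall>x\<in>bcar M. blact M (a * b) x = blact M a (blact M b x))
   \<and> (\<forall>a b. \<forall>x\<in>bcar M. blact M (a + b) x = badd M (blact M a x) (blact M b x))
   \<and> (\<forall>a. \<forall>x\<in>bcar M. \<forall>y\<in>bcar M. blact M a (badd M x y) = badd M (blact M a x) (blact M a y))
   \<and> (\<forall>x\<in>bcar M. bract M x 1 = x)
   \<and> (\<forall>a b. \<forall>x\<in>bcar M. bract M x (a * b) = bract M (bract M x a) b)
   \<and> (\<forall>a b. \<forall>x\<in>bcar M. bract M x (a + b) = badd M (bract M x a) (bract M x b))
   \<and> (\<forall>a. \<forall>x\<in>bcar M. \<forall>y\<in>bcar M. bract M (badd M x y) a = badd M (bract M x a) (bract M y a))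
   \<and> (\<forall>a b. \<forall>x\<in>bcar M. bract M (blact M a x) b = blact M a (bract M x b))
   \<and> (\<forall>c. \<forall>x\<in>bcar M. blact M (alg c) x = bract M x (alg c))"

definition bimod_hom :: "('a, 'm) bimod \<Rightarrow> ('a, 'n) bimod \<Rightarrow> ('m \<Rightarrow> 'n) \<Rightarrow> bool" where
  "bimod_hom M N f \<longleftrightarrow>
     (\<forall>x\<in>bcar M. f x \<in> bcar N)
   \<and> (\<forall>x\<in>bcar M. \<forall>y\<in>bcar M. f (badd M x y) = badd N (f x) (f y))
   \<and> (\<forall>a. \<forall>x\<in>bcar M. f (blact M a x) = blact N a (f x))
   \<and> (\<forall>a. \<forall>x\<in>bcar M. f (bract M x a) = bract N (f x) a)"

definition reg_bimod :: "('a::ring_1, 'a) bimod" where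
  "reg_bimod = \<lparr>bcar = UNIV, bzero = 0, badd = (+), bneg = uminus,
                blact = (*), bract = (*)\<rparr>"

definition coset :: "('a, 'm) bimod \<Rightarrow> 'm set \<Rightarrow> 'm \<Rightarrow> 'm set" where
  "coset N S x = {badd N x y | y. y \<in> S}"

definition quot_bimod :: "('a, 'm) bimod \<Rightarrow> 'm set \<Rightarrow> ('a, 'm set) bimod" where
  "quot_bimod N S =
    \<lparr>bcar = coset N S ` bcar N,
     bzero = S,
     badd = (\<lambda>X Y. coset N S (badd N (SOME x. x \<in> X) (SOME y. y \<in> Y))),
     bneg = (\<lambda>X. coset N S (bneg N (SOME x. x \<in> X))),
     blact = (\<lambda>a X. coset N S (blact N a (SOME x. x \<in> X))),
     bract = (\<lambda>X a. coset N S (bract N (SOME x. x \<in> X) a))\<rparr>"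

text \<open>M is projective iff every surjective bimodule map onto M splits.  It suffices
  to test surjections from bimodules whose carrier type is large enough to contain a
  copy of the free bimodule A (x)_k k[M] (x)_k A on the carrier of M; every element of
  the latter is a finite sum of elementary tensors a (x) m (x) b, so it is a quotient of
  lists of triples and embeds into sets of such lists.  Hence this definition is
  equivalent to the usual notion of a projective A-bimodule (A (x)_k A^op-module).\<close>
definition projective_bimod :: "('k::field \<Rightarrow> 'a::ring_1) \<Rightarrow> ('a, 'm) bimod \<Rightarrow> bool" where
  "projective_bimod alg M \<longleftrightarrow> bimodule alg M \<and>
     (\<forall>(N :: ('a, ('a \<times> 'm \<times> 'a) list set) bimod) g.
        bimodule alg N \<and> bimod_hom N M g \<and> g ` bcar N = bcar M \<longrightarrow>
        (\<exists>s. bimod_hom M N s \<and> (\<forall>x\<in>bcar M. g (s x) = x)))"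

text \<open>P n is the n-th term, d n : P (n+1) -> P n the differential, eps : P 0 -> A the
  augmentation; the augmented complex ... -> P 1 -> P 0 -> A -> 0 is exact.\<close>
definition bimod_resolution ::
  "('k::field \<Rightarrow> 'a::ring_1) \<Rightarrow> (nat \<Rightarrow> ('a, 'm) bimod) \<Rightarrow> (nat \<Rightarrow> 'm \<Rightarrow> 'm) \<Rightarrow> ('m \<Rightarrow> 'a) \<Rightarrow> bool" where
  "bimod_resolution alg P d eps \<longleftrightarrow>
     (\<forall>n. bimodule alg (P n))
   \<and> (\<forall>n. bimod_hom (P (Suc n)) (P n) (d n))
   \<and> bimod_hom (P 0) reg_bimod eps
   \<and> eps ` bcar (P 0) = UNIV
   \<and> {x \<in> bcar (P 0). eps x = 0} = d 0 ` bcar (P 1)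
   \<and> (\<forall>n. {x \<in> bcar (P (Suc n)). d n x = bzero (P n)} = d (Suc n) ` bcar (P (Suc (Suc n))))"

definition chain_map_lifting_id ::
  "(nat \<Rightarrow> ('a, 'm) bimod) \<Rightarrow> (nat \<Rightarrow> 'm \<Rightarrow> 'm) \<Rightarrow> ('m \<Rightarrow> 'a)
   \<Rightarrow> (nat \<Rightarrow> ('a, 'n) bimod) \<Rightarrow> (nat \<Rightarrow> 'n \<Rightarrow> 'n) \<Rightarrow> ('n \<Rightarrow> 'a)
   \<Rightarrow> (nat \<Rightarrow> 'm \<Rightarrow> 'n) \<Rightarrow> bool" where
  "chain_map_lifting_id P d eps P' d' eps' f \<longleftrightarrow>
     (\<forall>n. bimod_hom (P n) (P' n) (f n))
   \<and> (\<forall>n. \<forall>x\<in>bcar (P (Suc n)). d' n (f (Suc n) x) = f n (d n x))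
   \<and> (\<forall>x\<in>bcar (P 0). eps' (f 0 x) = eps x)"

definition graded_algebra :: "('k::field \<Rightarrow> 'a::ring_1) \<Rightarrow> (nat \<Rightarrow> 'a set) \<Rightarrow> bool" where
  "graded_algebra alg Ag \<longleftrightarrow>
     (\<forall>i. 0 \<in> Ag i \<and> (\<forall>a\<in>Ag i. \<forall>b\<in>Ag i. a + b \<in> Ag i) \<and> (\<forall>a\<in>Ag i. - a \<in> Ag i)
          \<and> (\<forall>c. \<forall>a\<in>Ag i. alg c * a \<in> Ag i))
   \<and> (\<forall>i j. \<forall>a\<in>Ag i. \<forall>b\<in>Ag j. a * b \<in> Ag (i + j))
   \<and> (\<forall>a. \<exists>N f. (\<forall>i. f i \<in> Ag i) \<and> a = (\<Sum>i<N. f i))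
   \<and> (\<forall>N f. (\<forall>i. f i \<in> Ag i) \<and> (\<Sum>i<N. f i) = 0 \<longrightarrow> (\<forall>i<N. f i = 0))"

definition int_grading :: "(nat \<Rightarrow> 'a::zero set) \<Rightarrow> int \<Rightarrow> 'a set" where
  "int_grading Ag j = (if 0 \<le> j then Ag (nat j) else {0})"

definition lsum :: "('a, 'm) bimod \<Rightarrow> 'm list \<Rightarrow> 'm" where
  "lsum M xs = foldr (badd M) xs (bzero M)"

definition graded_bimod ::
  "(nat \<Rightarrow> 'a::ring_1 set) \<Rightarrow> ('a, 'm) bimod \<Rightarrow> (int \<Rightarrow> 'm set) \<Rightarrow> bool" where
  "graded_bimod Ag M Mg \<longleftrightarrow>
     (\<forall>j. Mg j \<subseteq> bcar M \<and> bzero M \<in> Mg j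
          \<and> (\<forall>x\<in>Mg j. \<forall>y\<in>Mg j. badd M x y \<in> Mg j) \<and> (\<forall>x\<in>Mg j. bneg M x \<in> Mg j))
   \<and> (\<forall>i j. \<forall>a\<in>Ag i. \<forall>x\<in>Mg j. blact M a x \<in> Mg (int i + j) \<and> bract M x a \<in> Mg (j + int i))
   \<and> (\<forall>x\<in>bcar M. \<exists>N f. (\<forall>j. f j \<in> Mg j) \<and> x = lsum M (map f [-N..N]))
   \<and> (\<forall>N f. (\<forall>j. f j \<in> Mg j) \<and> lsum M (map f [-N..N]) = bzero M
          \<longrightarrow> (\<forall>j\<in>{-N..N}. f j = bzero M))"

definition graded_map :: "(int \<Rightarrow> 'm set) \<Rightarrow> (int \<Rightarrow> 'n set) \<Rightarrow> ('m \<Rightarrow> 'n) \<Rightarrow> bool" where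
  "graded_map Mg Ng f \<longleftrightarrow> (\<forall>j. f ` Mg j \<subseteq> Ng j)"

definition graded_resolution ::
  "(nat \<Rightarrow> 'a::ring_1 set) \<Rightarrow> (nat \<Rightarrow> ('a, 'm) bimod) \<Rightarrow> (nat \<Rightarrow> 'm \<Rightarrow> 'm) \<Rightarrow> ('m \<Rightarrow> 'a)
   \<Rightarrow> (nat \<Rightarrow> int \<Rightarrow> 'm set) \<Rightarrow> bool" where
  "graded_resolution Ag P d eps Pg \<longleftrightarrow>
     (\<forall>n. graded_bimod Ag (P n) (Pg n))
   \<and> (\<forall>n. graded_map (Pg (Suc n)) (Pg n) (d n))
   \<and> graded_map (Pg 0) (int_grading Ag) eps"

end

theory Submission
  imports Defs "HOL-Algebra.FiniteProduct"
begin

context fixes alg :: "'k::field \<Rightarrow> 'a::ring_1" and M :: "('a,'m) bimod"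
  assumes bm: "bimodule alg M"
begin

lemma bm_zero[simp]: "bzero M \<in> bcar M" using bm unfolding bimodule_def by (elim conjE) simp
lemma bm_add[simp]: "x \<in> bcar M \<Longrightarrow> y \<in> bcar M \<Longrightarrow> badd M x y \<in> bcar M" using bm unfolding bimodule_def by (elim conjE) simp
lemma bm_neg[simp]: "x \<in> bcar M \<Longrightarrow> bneg M x \<in> bcar M" using bm unfolding bimodule_def by (elim conjE) simp
lemma bm_lact[simp]: "x \<in> bcar M \<Longrightarrow> blact M a x \<in> bcar M" using bm unfolding bimodule_def by (elim conjE) simp
lemma bm_ract[simp]: "x \<in> bcar M \<Longrightarrow> bract M x a \<in> bcar M" using bm unfolding bimodule_def by (elim conjE) simp
lemma bm_assoc: "x \<in> bcar M \<Longrightarrow> y \<in> bcar M \<Longrightarrow> z \<in> bcar M \<Longrightarrow> badd M (badd M x y) z = badd M x (badd M y z)" using bm unfolding bimodule_def by (elim conjE) simp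
lemma bm_comm: "x \<in> bcar M \<Longrightarrow> y \<in> bcar M \<Longrightarrow> badd M x y = badd M y x" using bm unfolding bimodule_def by (elim conjE) simp
lemma bm_zero_l[simp]: "x \<in> bcar M \<Longrightarrow> badd M (bzero M) x = x" using bm unfolding bimodule_def by (elim conjE) simp
lemma bm_neg_l[simp]: "x \<in> bcar M \<Longrightarrow> badd M (bneg M x) x = bzero M" using bm unfolding bimodule_def by (elim conjE) simp
lemma bm_lact_one[simp]: "x \<in> bcar M \<Longrightarrow> blact M 1 x = x" using bm unfolding bimodule_def by (elim conjE) simp
lemma bm_lact_mult: "x \<in> bcar M \<Longrightarrow> blact M (a * b) x = blact M a (blact M b x)" using bm unfolding bimodule_def by (elim conjE) simp
lemma bm_lact_addr: "x \<in> bcar M \<Longrightarrow> blact M (a + b) x = badd M (blact M a x) (blact M b x)" using bm unfolding bimodule_def by (elim conjE) simp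
lemma bm_lact_add: "x \<in> bcar M \<Longrightarrow> y \<in> bcar M \<Longrightarrow> blact M a (badd M x y) = badd M (blact M a x) (blact M a y)" using bm unfolding bimodule_def by (elim conjE) simp
lemma bm_ract_one[simp]: "x \<in> bcar M \<Longrightarrow> bract M x 1 = x" using bm unfolding bimodule_def by (elim conjE) simp
lemma bm_ract_mult: "x \<in> bcar M \<Longrightarrow> bract M x (a * b) = bract M (bract M x a) b" using bm unfolding bimodule_def by (elim conjE) simp
lemma bm_ract_addr: "x \<in> bcar M \<Longrightarrow> bract M x (a + b) = badd M (bract M x a) (bract M x b)" using bm unfolding bimodule_def by (elim conjE) simp
lemma bm_ract_add: "x \<in> bcar M \<Longrightarrow> y \<in> bcar M \<Longrightarrow> bract M (badd M x y) a = badd M (bract M x a) (bract M y a)" using bm unfolding bimodule_def by (elim conjE) simp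
lemma bm_lr: "x \<in> bcar M \<Longrightarrow> bract M (blact M a x) b = blact M a (bract M x b)" using bm unfolding bimodule_def by (elim conjE) simp
lemma bm_alg: "x \<in> bcar M \<Longrightarrow> blact M (alg c) x = bract M x (alg c)" using bm unfolding bimodule_def by (elim conjE) simp

lemma bm_zero_r[simp]: "x \<in> bcar M \<Longrightarrow> badd M x (bzero M) = x"
  using bm_comm[of x "bzero M"] by simp
lemma bm_neg_r[simp]: "x \<in> bcar M \<Longrightarrow> badd M x (bneg M x) = bzero M"
  using bm_comm[of x "bneg M x"] by simp
lemma bm_lcomm: "x \<in> bcar M \<Longrightarrow> y \<in> bcar M \<Longrightarrow> z \<in> bcar M \<Longrightarrow> badd M x (badd M y z) = badd M y (badd M x z)"
  by (metis bm_assoc bm_comm)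

lemma bm_add4: "a \<in> bcar M \<Longrightarrow> b \<in> bcar M \<Longrightarrow> c \<in> bcar M \<Longrightarrow> d \<in> bcar M \<Longrightarrow>
   badd M (badd M a b) (badd M c d) = badd M (badd M a c) (badd M b d)"
  by (simp add: bm_assoc) (metis bm_lcomm bm_add)
lemma bm_add_neg_cancel[simp]: "x \<in> bcar M \<Longrightarrow> y \<in> bcar M \<Longrightarrow> badd M x (badd M (bneg M x) y) = y"
  using bm_assoc[of x "bneg M x" y] by simp
lemma bm_neg_add_cancel[simp]: "x \<in> bcar M \<Longrightarrow> y \<in> bcar M \<Longrightarrow> badd M (bneg M x) (badd M x y) = y"
  using bm_assoc[of "bneg M x" x y] by simp
lemma bm_cancel: assumes "x \<in> bcar M" "y \<in> bcar M" "z \<in> bcar M" "badd M x y = badd M x z"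
  shows "y = z"
proof -
  have "badd M (bneg M x) (badd M x y) = badd M (bneg M x) (badd M x z)" using assms by simp
  thus ?thesis using assms bm_assoc[of "bneg M x" x y] bm_assoc[of "bneg M x" x z] by simp
qed
lemma bm_cancel_iff[simp]: "x \<in> bcar M \<Longrightarrow> y \<in> bcar M \<Longrightarrow> z \<in> bcar M \<Longrightarrow> (badd M x y = badd M x z) = (y = z)"
  using bm_cancel by blast
lemma bm_neg_unique: "x \<in> bcar M \<Longrightarrow> y \<in> bcar M \<Longrightarrow> badd M x y = bzero M \<Longrightarrow> y = bneg M x"
  using bm_cancel[of x y "bneg M x"] by simp
lemma bm_idem_zero: "x \<in> bcar M \<Longrightarrow> badd M x x = x \<Longrightarrow> x = bzero M"
  using bm_cancel[of x x "bzero M"] by simp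
lemma bm_neg_neg[simp]: "x \<in> bcar M \<Longrightarrow> bneg M (bneg M x) = x"
  using bm_neg_unique[of "bneg M x" x] by simp
lemma bm_neg_zero[simp]: "bneg M (bzero M) = bzero M"
  using bm_neg_unique[of "bzero M" "bzero M"] by simp
lemma bm_neg_add: assumes "x \<in> bcar M" "y \<in> bcar M"
  shows "bneg M (badd M x y) = badd M (bneg M x) (bneg M y)"
proof -
  have "badd M (badd M x y) (badd M (bneg M x) (bneg M y)) = badd M (badd M x (bneg M x)) (badd M y (bneg M y))"
    using assms bm_add4[of x y "bneg M x" "bneg M y"] by simp
  also have "\<dots> = bzero M" using assms by simp
  finally show ?thesis using assms bm_neg_unique[of "badd M x y" "badd M (bneg M x) (bneg M y)"] by simp
qed
lemma bm_lact_zero[simp]: "blact M a (bzero M) = bzero M"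
  using bm_idem_zero[of "blact M a (bzero M)"] bm_lact_add[of "bzero M" "bzero M" a] by simp
lemma bm_ract_zero[simp]: "bract M (bzero M) a = bzero M"
  using bm_idem_zero[of "bract M (bzero M) a"] bm_ract_add[of "bzero M" "bzero M" a] by simp
lemma bm_lact_0[simp]: "x \<in> bcar M \<Longrightarrow> blact M 0 x = bzero M"
  using bm_idem_zero[of "blact M 0 x"] bm_lact_addr[of x 0 0] by simp
lemma bm_ract_0[simp]: "x \<in> bcar M \<Longrightarrow> bract M x 0 = bzero M"
  using bm_idem_zero[of "bract M x 0"] bm_ract_addr[of x 0 0] by simp
lemma bm_lact_neg: "x \<in> bcar M \<Longrightarrow> blact M a (bneg M x) = bneg M (blact M a x)"
  using bm_neg_unique[of "blact M a x" "blact M a (bneg M x)"] bm_lact_add[of x "bneg M x" a] by simp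
lemma bm_ract_neg: "x \<in> bcar M \<Longrightarrow> bract M (bneg M x) a = bneg M (bract M x a)"
  using bm_neg_unique[of "bract M x a" "bract M (bneg M x) a"] bm_ract_add[of x "bneg M x" a] by simp
lemma bm_lact_uminus: "x \<in> bcar M \<Longrightarrow> blact M (- a) x = bneg M (blact M a x)"
  using bm_neg_unique[of "blact M a x" "blact M (-a) x"] bm_lact_addr[of x a "-a"] by simp
lemma bm_ract_uminus: "x \<in> bcar M \<Longrightarrow> bract M x (- a) = bneg M (bract M x a)"
  using bm_neg_unique[of "bract M x a" "bract M x (-a)"] bm_ract_addr[of x a "-a"] by simp
lemmas bm_ac = bm_assoc bm_comm bm_lcomm

end

lemmas bm_all = bm_zero bm_add bm_neg bm_lact bm_ract bm_zero_l bm_neg_l bm_lact_one bm_ract_one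
  bm_zero_r bm_neg_r bm_neg_neg bm_neg_zero bm_lact_zero bm_ract_zero bm_lact_0 bm_ract_0
  bm_add_neg_cancel bm_neg_add_cancel

context fixes M :: "('a,'m) bimod" and N :: "('a,'n) bimod" and f
  assumes hom: "bimod_hom M N f"
begin
lemma hom_car[simp]: "x \<in> bcar M \<Longrightarrow> f x \<in> bcar N" using hom unfolding bimod_hom_def by blast
lemma hom_add: "x \<in> bcar M \<Longrightarrow> y \<in> bcar M \<Longrightarrow> f (badd M x y) = badd N (f x) (f y)" using hom unfolding bimod_hom_def by blast
lemma hom_lact: "x \<in> bcar M \<Longrightarrow> f (blact M a x) = blact N a (f x)" using hom unfolding bimod_hom_def by blast
lemma hom_ract: "x \<in> bcar M \<Longrightarrow> f (bract M x a) = bract N (f x) a" using hom unfolding bimod_hom_def by blast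
end

lemma hom_zero: assumes "bimodule alg M" "bimodule alg N" "bimod_hom M N f"
  shows "f (bzero M) = bzero N"
  using hom_add[OF assms(3), of "bzero M" "bzero M"] bm_idem_zero[OF assms(2), of "f (bzero M)"]
    assms by simp
lemma hom_neg: assumes "bimodule alg M" "bimodule alg N" "bimod_hom M N f" "x \<in> bcar M"
  shows "f (bneg M x) = bneg N (f x)"
  using hom_add[OF assms(3), of x "bneg M x"] hom_zero[OF assms(1-3)]
    bm_neg_unique[OF assms(2), of "f x" "f (bneg M x)"] assms by simp

lemma hom_comp: "bimod_hom M N f \<Longrightarrow> bimod_hom N K g \<Longrightarrow> bimod_hom M K (\<lambda>x. g (f x))"
  unfolding bimod_hom_def by auto

lemma hom_cong: assumes bm: "bimodule alg M" and h: "bimod_hom M N f" and e: "\<And>x. x\<in>bcar M \<Longrightarrow> f x = g x"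
  shows "bimod_hom M N g"
  unfolding bimod_hom_def using hom_car[OF h] hom_add[OF h] hom_lact[OF h] hom_ract[OF h]
  by (simp add: e[symmetric] bm_add[OF bm] bm_lact[OF bm] bm_ract[OF bm])

lemma hom_id: "bimodule alg M \<Longrightarrow> bimod_hom M M (\<lambda>x. x)"
  unfolding bimod_hom_def by simp

lemma hom_plus: assumes bm: "bimodule alg N" and f: "bimod_hom M N f" and g: "bimod_hom M N g"
  shows "bimod_hom M N (\<lambda>x. badd N (f x) (g x))"
  unfolding bimod_hom_def
  using bm by (simp add: hom_add[OF f] hom_lact[OF f] hom_ract[OF f] hom_add[OF g] hom_lact[OF g] hom_ract[OF g]
     hom_car[OF f] hom_car[OF g] bm_lact_add bm_ract_add bm_add4)

lemma hom_uminus: assumes bm: "bimodule alg N" and f: "bimod_hom M N f"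
  shows "bimod_hom M N (\<lambda>x. bneg N (f x))"
  unfolding bimod_hom_def
  using bm by (simp add: hom_add[OF f] hom_lact[OF f] hom_ract[OF f] hom_car[OF f] bm_neg_add bm_lact_neg bm_ract_neg)


definition subbm :: "('a, 'm) bimod \<Rightarrow> 'm set \<Rightarrow> bool" where
  "subbm N S \<longleftrightarrow> S \<subseteq> bcar N \<and> bzero N \<in> S \<and> (\<forall>x\<in>S. \<forall>y\<in>S. badd N x y \<in> S) \<and> (\<forall>x\<in>S. bneg N x \<in> S)
     \<and> (\<forall>a. \<forall>x\<in>S. blact N a x \<in> S) \<and> (\<forall>a. \<forall>x\<in>S. bract N x a \<in> S)"

lemma upd_simps: "bcar (N\<lparr>bcar:=S\<rparr>) = S" "bzero (N\<lparr>bcar:=S\<rparr>) = bzero N"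
  "badd (N\<lparr>bcar:=S\<rparr>) = badd N" "bneg (N\<lparr>bcar:=S\<rparr>) = bneg N"
  "blact (N\<lparr>bcar:=S\<rparr>) = blact N" "bract (N\<lparr>bcar:=S\<rparr>) = bract N"
  by simp_all

lemma subbm_in: "subbm N S \<Longrightarrow> x \<in> S \<Longrightarrow> x \<in> bcar N" unfolding subbm_def by blast
lemma subbm_zero: "subbm N S \<Longrightarrow> bzero N \<in> S" unfolding subbm_def by blast
lemma subbm_add: "subbm N S \<Longrightarrow> x \<in> S \<Longrightarrow> y \<in> S \<Longrightarrow> badd N x y \<in> S" unfolding subbm_def by blast
lemma subbm_neg: "subbm N S \<Longrightarrow> x \<in> S \<Longrightarrow> bneg N x \<in> S" unfolding subbm_def by blast
lemma subbm_lact: "subbm N S \<Longrightarrow> x \<in> S \<Longrightarrow> blact N a x \<in> S" unfolding subbm_def by blast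
lemma subbm_ract: "subbm N S \<Longrightarrow> x \<in> S \<Longrightarrow> bract N x a \<in> S" unfolding subbm_def by blast

lemma subbm_bimodule: assumes bm: "bimodule alg N" and S: "subbm N S"
  shows "bimodule alg (N\<lparr>bcar := S\<rparr>)"
proof -
  have i: "\<And>x. x \<in> S \<Longrightarrow> x \<in> bcar N" using subbm_in[OF S] .
  show ?thesis unfolding bimodule_def
    apply (simp only: upd_simps)
    apply (intro conjI ballI allI)
    using subbm_zero[OF S] subbm_add[OF S] subbm_neg[OF S] subbm_lact[OF S] subbm_ract[OF S]
    apply (simp_all add: i bm_all[OF bm] bm_assoc[OF bm] bm_lact_mult[OF bm] bm_lact_addr[OF bm]
      bm_lact_add[OF bm] bm_ract_mult[OF bm] bm_ract_addr[OF bm] bm_ract_add[OF bm] bm_lr[OF bm] bm_alg[OF bm])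
    by (simp add: i bm_comm[OF bm])
qed

lemma subbm_hom_incl: "subbm N S \<Longrightarrow> bimod_hom (N\<lparr>bcar := S\<rparr>) N (\<lambda>x. x)"
  unfolding bimod_hom_def by (simp add: subbm_in)

lemma hom_restrict: "bimod_hom N M g \<Longrightarrow> S \<subseteq> bcar N \<Longrightarrow> bimod_hom (N\<lparr>bcar := S\<rparr>) M g"
  unfolding bimod_hom_def upd_simps by blast

lemma hom_corestrict: "bimod_hom M N g \<Longrightarrow> g ` bcar M \<subseteq> S \<Longrightarrow> bimod_hom M (N\<lparr>bcar := S\<rparr>) g"
  unfolding bimod_hom_def by auto

lemma subbm_image: assumes bM: "bimodule alg M" and bN: "bimodule alg N" and f: "bimod_hom M N f"
  shows "subbm N (f ` bcar M)"
  unfolding subbm_def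
proof (intro conjI ballI allI)
  show "f ` bcar M \<subseteq> bcar N" using f by auto
  show "bzero N \<in> f ` bcar M" using hom_zero[OF bM bN f] bm_zero[OF bM] by (metis image_eqI)
  fix x y a assume x: "x \<in> f ` bcar M"
  then obtain x' where x': "x' \<in> bcar M" "x = f x'" by auto
  show "bneg N x \<in> f ` bcar M" using hom_neg[OF bM bN f x'(1)] x' bm_neg[OF bM] by (metis image_eqI)
  show "blact N a x \<in> f ` bcar M" using hom_lact[OF f x'(1)] x' bm_lact[OF bM] by (metis image_eqI)
  show "bract N x a \<in> f ` bcar M" using hom_ract[OF f x'(1)] x' bm_ract[OF bM] by (metis image_eqI)
  assume "y \<in> f ` bcar M"
  then obtain y' where y': "y' \<in> bcar M" "y = f y'" by auto
  show "badd N x y \<in> f ` bcar M" using hom_add[OF f x'(1) y'(1)] x' y' bm_add[OF bM] by (metis image_eqI)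
qed

section \<open>Cosets\<close>

context fixes alg :: "'k::field \<Rightarrow> 'a::ring_1" and N :: "('a,'m) bimod" and S
  assumes bm: "bimodule alg N" and S: "subbm N S"
begin

lemma sub_trans: "z \<in> bcar N \<Longrightarrow> x \<in> bcar N \<Longrightarrow> y \<in> bcar N \<Longrightarrow>
   badd N (badd N z (bneg N x)) (badd N x (bneg N y)) = badd N z (bneg N y)"
  using bm by (simp add: bm_assoc bm_all)

lemma mem_coset: assumes x: "x \<in> bcar N"
  shows "z \<in> coset N S x \<longleftrightarrow> z \<in> bcar N \<and> badd N z (bneg N x) \<in> S"
proof
  assume "z \<in> coset N S x"
  then obtain s where s: "s \<in> S" "z = badd N x s" unfolding coset_def by auto
  have sN: "s \<in> bcar N" using subbm_in[OF S s(1)] .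
  have "badd N z (bneg N x) = s" using s x sN bm bm_comm[OF bm, of x s] bm_assoc[OF bm, of s x "bneg N x"] by simp
  thus "z \<in> bcar N \<and> badd N z (bneg N x) \<in> S" using s x sN bm by simp
next
  assume z: "z \<in> bcar N \<and> badd N z (bneg N x) \<in> S"
  have "z = badd N x (badd N z (bneg N x))" using z x bm by (simp add: bm_lcomm[OF bm, of x z])
  thus "z \<in> coset N S x" unfolding coset_def using z by blast
qed

lemma coset_self: "x \<in> bcar N \<Longrightarrow> x \<in> coset N S x"
  using mem_coset bm subbm_zero[OF S] by simp

lemma coset_eq_iff: assumes x: "x \<in> bcar N" and y: "y \<in> bcar N"
  shows "coset N S x = coset N S y \<longleftrightarrow> badd N x (bneg N y) \<in> S"
proof
  assume "coset N S x = coset N S y"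
  thus "badd N x (bneg N y) \<in> S" using coset_self[OF x] mem_coset[OF y] by blast
next
  assume d: "badd N x (bneg N y) \<in> S"
  have d': "badd N y (bneg N x) \<in> S"
    using subbm_neg[OF S d] x y bm by (simp add: bm_neg_add bm_comm)
  show "coset N S x = coset N S y"
  proof (intro Set.set_eqI iffI)
    fix z assume "z \<in> coset N S x"
    hence z: "z \<in> bcar N" "badd N z (bneg N x) \<in> S" using mem_coset[OF x] by auto
    thus "z \<in> coset N S y" using mem_coset[OF y] subbm_add[OF S z(2) d] sub_trans[OF z(1) x y] by simp
  next
    fix z assume "z \<in> coset N S y"
    hence z: "z \<in> bcar N" "badd N z (bneg N y) \<in> S" using mem_coset[OF y] by auto
    thus "z \<in> coset N S x" using mem_coset[OF x] subbm_add[OF S z(2) d'] sub_trans[OF z(1) y x] by simp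
  qed
qed

lemma some_coset: assumes x: "x \<in> bcar N"
  shows "(SOME z. z \<in> coset N S x) \<in> bcar N" "coset N S (SOME z. z \<in> coset N S x) = coset N S x"
proof -
  have "(SOME z. z \<in> coset N S x) \<in> coset N S x" using coset_self[OF x] by (rule someI)
  hence *: "(SOME z. z \<in> coset N S x) \<in> bcar N" "badd N (SOME z. z \<in> coset N S x) (bneg N x) \<in> S"
    using mem_coset[OF x] by auto
  show "(SOME z. z \<in> coset N S x) \<in> bcar N" using * by simp
  show "coset N S (SOME z. z \<in> coset N S x) = coset N S x" using coset_eq_iff[OF *(1) x] * by simp
qed

lemma quot_add: assumes x: "x \<in> bcar N" and y: "y \<in> bcar N"
  shows "badd (quot_bimod N S) (coset N S x) (coset N S y) = coset N S (badd N x y)"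
proof -
  define u where "u = (SOME z. z \<in> coset N S x)"
  define v where "v = (SOME z. z \<in> coset N S y)"
  have u: "u \<in> bcar N" "badd N u (bneg N x) \<in> S" using some_coset[OF x] coset_eq_iff[OF _ x] u_def by auto
  have v: "v \<in> bcar N" "badd N v (bneg N y) \<in> S" using some_coset[OF y] coset_eq_iff[OF _ y] v_def by auto
  have "badd N (badd N u v) (bneg N (badd N x y)) = badd N (badd N u (bneg N x)) (badd N v (bneg N y))"
    using u v x y bm by (simp add: bm_neg_add bm_add4)
  hence "badd N (badd N u v) (bneg N (badd N x y)) \<in> S" using subbm_add[OF S u(2) v(2)] by simp
  hence "coset N S (badd N u v) = coset N S (badd N x y)" using coset_eq_iff u v x y bm by simp
  thus ?thesis unfolding quot_bimod_def u_def v_def by simp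
qed

lemma quot_lact: assumes x: "x \<in> bcar N"
  shows "blact (quot_bimod N S) a (coset N S x) = coset N S (blact N a x)"
proof -
  define u where "u = (SOME z. z \<in> coset N S x)"
  have u: "u \<in> bcar N" "badd N u (bneg N x) \<in> S" using some_coset[OF x] coset_eq_iff[OF _ x] u_def by auto
  have "badd N (blact N a u) (bneg N (blact N a x)) = blact N a (badd N u (bneg N x))"
    using u x bm by (simp add: bm_lact_add bm_lact_neg)
  hence "badd N (blact N a u) (bneg N (blact N a x)) \<in> S" using subbm_lact[OF S u(2)] by simp
  hence "coset N S (blact N a u) = coset N S (blact N a x)" using coset_eq_iff u x bm by simp
  thus ?thesis unfolding quot_bimod_def u_def by simp
qed

lemma quot_ract: assumes x: "x \<in> bcar N"
  shows "bract (quot_bimod N S) (coset N S x) a = coset N S (bract N x a)"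
proof -
  define u where "u = (SOME z. z \<in> coset N S x)"
  have u: "u \<in> bcar N" "badd N u (bneg N x) \<in> S" using some_coset[OF x] coset_eq_iff[OF _ x] u_def by auto
  have "badd N (bract N u a) (bneg N (bract N x a)) = bract N (badd N u (bneg N x)) a"
    using u x bm by (simp add: bm_ract_add bm_ract_neg)
  hence "badd N (bract N u a) (bneg N (bract N x a)) \<in> S" using subbm_ract[OF S u(2)] by simp
  hence "coset N S (bract N u a) = coset N S (bract N x a)" using coset_eq_iff u x bm by simp
  thus ?thesis unfolding quot_bimod_def u_def by simp
qed

lemma quot_hom: "bimod_hom N (quot_bimod N S) (coset N S)"
  unfolding bimod_hom_def using quot_add quot_lact quot_ract bm by (simp add: quot_bimod_def)

lemma quot_surj: "coset N S ` bcar N = bcar (quot_bimod N S)"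
  by (simp add: quot_bimod_def)

lemma quot_zero_iff: "x \<in> bcar N \<Longrightarrow> coset N S x = bzero (quot_bimod N S) \<longleftrightarrow> x \<in> S"
proof -
  assume x: "x \<in> bcar N"
  have "coset N S (bzero N) = S"
  proof -
    show ?thesis unfolding coset_def using subbm_in[OF S] bm_zero_l[OF bm] by force
  qed
  thus ?thesis using coset_eq_iff[OF x bm_zero[OF bm]] x bm by (simp add: quot_bimod_def)
qed

end

section \<open>Transport of a bimodule along an injection\<close>

definition btransp :: "('a, 'y) bimod \<Rightarrow> ('y \<Rightarrow> 'z) \<Rightarrow> ('z \<Rightarrow> 'y) \<Rightarrow> ('a, 'z) bimod" where
  "btransp N e u = \<lparr>bcar = e ` bcar N, bzero = e (bzero N), badd = (\<lambda>X Y. e (badd N (u X) (u Y))),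
     bneg = (\<lambda>X. e (bneg N (u X))), blact = (\<lambda>a X. e (blact N a (u X))), bract = (\<lambda>X a. e (bract N (u X) a))\<rparr>"

lemma ball_img: "(\<forall>X\<in>f ` A. P X) = (\<forall>x\<in>A. P (f x))" by auto

lemma transp_bimodule: assumes bm: "bimodule alg N" and ue: "\<And>x. x \<in> bcar N \<Longrightarrow> u (e x) = x"
  shows "bimodule alg (btransp N e u)"
  unfolding bimodule_def btransp_def
  apply (simp only: bimod.select_convs ball_img)
  apply (intro conjI ballI allI)
  apply (simp_all add: ue bm_all[OF bm] imageI bm_assoc[OF bm] bm_lact_mult[OF bm] bm_lact_addr[OF bm]
      bm_lact_add[OF bm] bm_ract_mult[OF bm] bm_ract_addr[OF bm] bm_ract_add[OF bm] bm_lr[OF bm] bm_alg[OF bm])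
  by (simp_all add: ue bm_all[OF bm] bm_comm[OF bm])


lemma transp_hom_u: assumes bm: "bimodule alg N" and ue: "\<And>x. x \<in> bcar N \<Longrightarrow> u (e x) = x"
  shows "bimod_hom (btransp N e u) N u"
  unfolding bimod_hom_def btransp_def by (simp add: ball_img ue bm bm_add[OF bm] bm_neg[OF bm] bm_lact[OF bm] bm_ract[OF bm])

lemma transp_hom_e: assumes bm: "bimodule alg N" and ue: "\<And>x. x \<in> bcar N \<Longrightarrow> u (e x) = x"
  shows "bimod_hom N (btransp N e u) e"
  unfolding bimod_hom_def btransp_def by (simp add: ue bm bm_add[OF bm] bm_neg[OF bm] bm_lact[OF bm] bm_ract[OF bm])


definition evl :: "('a, 'y) bimod \<Rightarrow> ('x \<Rightarrow> 'y) \<Rightarrow> ('a \<times> 'x \<times> 'a) list \<Rightarrow> 'y" where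
  "evl N pre xs = foldr (\<lambda>(a,m,b) r. badd N (bract N (blact N a (pre m)) b) r) xs (bzero N)"

context fixes alg :: "'k::field \<Rightarrow> 'a::ring_1" and N :: "('a,'y) bimod" and pre :: "'x \<Rightarrow> 'y"
  assumes bm: "bimodule alg N" and pre: "\<And>m. pre m \<in> bcar N"
begin

lemma evl_Nil[simp]: "evl N pre [] = bzero N" by (simp add: evl_def)
lemma evl_Cons[simp]: "evl N pre ((a,m,b) # xs) = badd N (bract N (blact N a (pre m)) b) (evl N pre xs)"
  by (simp add: evl_def)
lemma evl_in[simp]: "evl N pre xs \<in> bcar N"
  by (induction xs) (auto simp: bm_all[OF bm] pre)
lemma evl_append: "evl N pre (xs @ ys) = badd N (evl N pre xs) (evl N pre ys)"
  by (induction xs) (auto simp: bm_all[OF bm] pre bm_assoc[OF bm])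
lemma evl_neg: "evl N pre (map (\<lambda>(a,y). (-a,y)) xs) = bneg N (evl N pre xs)"
  by (induction xs) (auto simp: bm_all[OF bm] pre bm_neg_add[OF bm] bm_lact_uminus[OF bm] bm_ract_neg[OF bm])
lemma evl_lmul: "evl N pre (map (\<lambda>(a,y). (c*a,y)) xs) = blact N c (evl N pre xs)"
  by (induction xs) (auto simp: bm_all[OF bm] pre bm_lact_add[OF bm] bm_lact_mult[OF bm] bm_lr[OF bm])
lemma evl_rmul: "evl N pre (map (\<lambda>(a,m,b). (a,m,b*c)) xs) = bract N (evl N pre xs) c"
  by (induction xs) (auto simp: bm_all[OF bm] pre bm_ract_add[OF bm] bm_ract_mult[OF bm])
lemma evl_single: "evl N pre [(1,m,1)] = pre m"
  by (simp add: bm_all[OF bm] pre)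
end

lemma proj_split:
  fixes M :: "('a::ring_1, 'x) bimod" and N0 :: "('a,'y) bimod" and alg :: "'k::field \<Rightarrow> 'a"
  assumes pr: "projective_bimod alg M" and bN0: "bimodule alg N0" and g: "bimod_hom N0 M g"
    and sur: "g ` bcar N0 = bcar M"
  shows "\<exists>s. bimod_hom M N0 s \<and> (\<forall>x\<in>bcar M. g (s x) = x)"
proof -
  have bM: "bimodule alg M" using pr unfolding projective_bimod_def by blast
  define pre where "pre m = (if m \<in> bcar M then SOME z. z \<in> bcar N0 \<and> g z = m else bzero N0)" for m
  have ex: "\<exists>z. z \<in> bcar N0 \<and> g z = m" if "m \<in> bcar M" for m using sur that by (metis imageE)
  have pre1: "pre m \<in> bcar N0" for m
    using someI_ex[OF ex[of m]] bm_zero[OF bN0] unfolding pre_def by auto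
  have pre2: "g (pre m) = m" if "m \<in> bcar M" for m
    using someI_ex[OF ex[OF that]] that unfolding pre_def by auto
  define ev where "ev = evl N0 pre"
  define S where "S = range ev"
  note evs = evl_in[OF bN0 pre1] evl_append[OF bN0 pre1] evl_neg[OF bN0 pre1] evl_lmul[OF bN0 pre1]
     evl_rmul[OF bN0 pre1] evl_single[OF bN0 pre1] evl_Nil
  have S: "subbm N0 S" unfolding subbm_def S_def
  proof (intro conjI ballI allI)
    show "range ev \<subseteq> bcar N0" using evs unfolding ev_def by auto
    show "bzero N0 \<in> range ev" by (rule range_eqI[of _ _ "[]"]) (simp add: ev_def evl_def)
    fix x y a assume "x \<in> range ev"
    then obtain xs where xs: "x = ev xs" by auto
    show "bneg N0 x \<in> range ev" by (rule range_eqI[of _ _ "map (\<lambda>(a,y). (-a,y)) xs"]) (simp add: ev_def xs evs)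
    show "blact N0 a x \<in> range ev" by (rule range_eqI[of _ _ "map (\<lambda>(b,y). (a*b,y)) xs"]) (simp add: ev_def xs evs)
    show "bract N0 x a \<in> range ev" by (rule range_eqI[of _ _ "map (\<lambda>(b,m,c). (b,m,c*a)) xs"]) (simp add: ev_def xs evs)
    assume "y \<in> range ev"
    then obtain ys where ys: "y = ev ys" by auto
    show "badd N0 x y \<in> range ev" by (rule range_eqI[of _ _ "xs @ ys"]) (simp add: ev_def xs ys evs)
  qed
  define N1 where "N1 = N0\<lparr>bcar := S\<rparr>"
  have bN1: "bimodule alg N1" unfolding N1_def using subbm_bimodule[OF bN0 S] .
  define e :: "'y \<Rightarrow> ('a \<times> 'x \<times> 'a) list set" where "e y = {xs. ev xs = y}" for y
  define u where "u X = ev (SOME xs. xs \<in> X)" for X :: "('a \<times> 'x \<times> 'a) list set"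
  have ue: "u (e y) = y" if "y \<in> bcar N1" for y
  proof -
    have "y \<in> S" using that unfolding N1_def by simp
    then obtain xs where "ev xs = y" unfolding S_def by auto
    hence "\<exists>xs. xs \<in> e y" unfolding e_def by auto
    from someI_ex[OF this] show ?thesis unfolding u_def e_def by simp
  qed
  define N where "N = btransp N1 e u"
  have bN: "bimodule alg N" unfolding N_def using transp_bimodule[of alg N1 u e, OF bN1 ue] .
  have hu: "bimod_hom N N1 u" unfolding N_def using transp_hom_u[of alg N1 u e, OF bN1 ue] .
  have g1: "bimod_hom N1 M g" unfolding N1_def
    using hom_restrict[OF g] subbm_in[OF S] by blast
  have g': "bimod_hom N M (\<lambda>X. g (u X))" using hom_comp[OF hu g1] .
  have sur': "(\<lambda>X. g (u X)) ` bcar N = bcar M"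
  proof
    show "(\<lambda>X. g (u X)) ` bcar N \<subseteq> bcar M" using hom_car[OF g'] by auto
    show "bcar M \<subseteq> (\<lambda>X. g (u X)) ` bcar N"
    proof
      fix m assume m: "m \<in> bcar M"
      have "pre m \<in> S" unfolding S_def by (rule range_eqI[of _ _ "[(1,m,1)]"]) (simp add: ev_def evs)
      hence "pre m \<in> bcar N1" unfolding N1_def by simp
      hence "e (pre m) \<in> bcar N" "g (u (e (pre m))) = m" using ue pre2[OF m] unfolding N_def btransp_def by auto
      thus "m \<in> (\<lambda>X. g (u X)) ` bcar N" by (metis image_eqI)
    qed
  qed
  obtain s' where s': "bimod_hom M N s'" "\<forall>x\<in>bcar M. g (u (s' x)) = x"
    using pr bN g' sur' unfolding projective_bimod_def by blast
  have "bimod_hom M N0 (\<lambda>x. u (s' x))"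
    using hom_comp[OF hom_comp[OF s'(1) hu] subbm_hom_incl[OF S, folded N1_def]] by simp
  thus ?thesis using s'(2) by blast
qed


definition pb :: "('a,'m) bimod \<Rightarrow> ('a,'n) bimod \<Rightarrow> ('m \<Rightarrow> 't) \<Rightarrow> ('n \<Rightarrow> 't) \<Rightarrow> ('a, 'm \<times> 'n) bimod" where
  "pb P Q D h = \<lparr>bcar = {z. fst z \<in> bcar P \<and> snd z \<in> bcar Q \<and> D (fst z) = h (snd z)},
     bzero = (bzero P, bzero Q),
     badd = (\<lambda>u v. (badd P (fst u) (fst v), badd Q (snd u) (snd v))),
     bneg = (\<lambda>u. (bneg P (fst u), bneg Q (snd u))),
     blact = (\<lambda>a u. (blact P a (fst u), blact Q a (snd u))),
     bract = (\<lambda>u a. (bract P (fst u) a, bract Q (snd u) a))\<rparr>"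

lemma pb_bimodule: assumes bP: "bimodule alg P" and bQ: "bimodule alg Q" and bT: "bimodule alg T"
  and D: "bimod_hom P T D" and h: "bimod_hom Q T h"
  shows "bimodule alg (pb P Q D h)"
  unfolding bimodule_def pb_def
  apply (simp only: bimod.select_convs mem_Collect_eq)
  apply (intro conjI ballI allI)
  apply (simp_all add: bm_all[OF bP] bm_all[OF bQ] hom_add[OF D] hom_add[OF h] hom_lact[OF D] hom_lact[OF h]
    hom_ract[OF D] hom_ract[OF h] hom_zero[OF bP bT D] hom_zero[OF bQ bT h] hom_neg[OF bP bT D] hom_neg[OF bQ bT h]
    bm_assoc[OF bP] bm_assoc[OF bQ] bm_lact_mult[OF bP] bm_lact_mult[OF bQ] bm_lact_addr[OF bP] bm_lact_addr[OF bQ]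
    bm_lact_add[OF bP] bm_lact_add[OF bQ] bm_ract_mult[OF bP] bm_ract_mult[OF bQ] bm_ract_addr[OF bP] bm_ract_addr[OF bQ]
    bm_ract_add[OF bP] bm_ract_add[OF bQ] bm_lr[OF bP] bm_lr[OF bQ] bm_alg[OF bP] bm_alg[OF bQ])
  by (simp add: bm_comm[OF bP] bm_comm[OF bQ])

lemma pb_fst: "bimod_hom (pb P Q D h) P fst"
  unfolding bimod_hom_def pb_def by simp
lemma pb_snd: "bimod_hom (pb P Q D h) Q snd"
  unfolding bimod_hom_def pb_def by simp

lemma hom_inv: assumes bP: "bimodule alg P" and bP': "bimodule alg P'" and bK: "bimodule alg K"
  and psi: "bimod_hom P P' psi" and inj: "inj_on psi (bcar P)"
  and w: "bimod_hom K P' w" and sub: "w ` bcar K \<subseteq> psi ` bcar P"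
  shows "bimod_hom K P (\<lambda>x. inv_into (bcar P) psi (w x))"
proof -
  have i1: "inv_into (bcar P) psi (w x) \<in> bcar P" if "x \<in> bcar K" for x
    using sub that by (meson image_subset_iff inv_into_into)
  have i2: "psi (inv_into (bcar P) psi (w x)) = w x" if "x \<in> bcar K" for x
    using sub that by (meson image_subset_iff f_inv_into_f)
  have key: "inv_into (bcar P) psi (w x) = a" if "x \<in> bcar K" "a \<in> bcar P" "psi a = w x" for x a
    using that inj by (metis inv_into_f_f)
  show ?thesis unfolding bimod_hom_def
  proof (intro conjI ballI allI)
    fix x assume x: "x \<in> bcar K"
    show "inv_into (bcar P) psi (w x) \<in> bcar P" using i1 x .
    fix a
    show "inv_into (bcar P) psi (w (blact K a x)) = blact P a (inv_into (bcar P) psi (w x))"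
      using key[of "blact K a x"] x i1[OF x] i2[OF x] hom_lact[OF psi] hom_lact[OF w] bm_all[OF bK] bm_all[OF bP] by simp
    show "inv_into (bcar P) psi (w (bract K x a)) = bract P (inv_into (bcar P) psi (w x)) a"
      using key[of "bract K x a"] x i1[OF x] i2[OF x] hom_ract[OF psi] hom_ract[OF w] bm_all[OF bK] bm_all[OF bP] by simp
  next
    fix x y assume x: "x \<in> bcar K" and y: "y \<in> bcar K"
    show "inv_into (bcar P) psi (w (badd K x y)) = badd P (inv_into (bcar P) psi (w x)) (inv_into (bcar P) psi (w y))"
      using key[of "badd K x y"] x y i1[OF x] i2[OF x] i1[OF y] i2[OF y] hom_add[OF psi] hom_add[OF w]
        bm_all[OF bK] bm_all[OF bP] by simp
  qed
qed

lemma ext_lemma: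
  fixes alg :: "'k::field \<Rightarrow> 'a::ring_1" and P :: "('a,'m) bimod" and P' :: "('a,'n) bimod"
    and T :: "('a,'t) bimod"
  assumes bP: "bimodule alg P" and bP': "bimodule alg P'" and bT: "bimodule alg T"
    and psi: "bimod_hom P P' psi" and inj: "inj_on psi (bcar P)"
    and pr: "projective_bimod alg (quot_bimod P' (psi ` bcar P))"
    and D: "bimod_hom P T D" and h: "bimod_hom P' T h"
    and hp: "\<forall>x\<in>bcar P. h (psi x) = D x" and hsub: "h ` bcar P' \<subseteq> D ` bcar P"
  shows "\<exists>f. bimod_hom P' P f \<and> (\<forall>x\<in>bcar P. f (psi x) = x) \<and> (\<forall>y\<in>bcar P'. D (f y) = h y)"
proof -
  define S where "S = psi ` bcar P"
  have S: "subbm P' S" unfolding S_def using subbm_image[OF bP bP' psi] .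
  define Q where "Q = quot_bimod P' S"
  have bQ: "bimodule alg Q" using pr unfolding projective_bimod_def Q_def S_def by blast
  have prQ: "projective_bimod alg Q" using pr unfolding Q_def S_def .
  define NP where "NP = pb P P' D h"
  have bNP: "bimodule alg NP" unfolding NP_def using pb_bimodule[OF bP bP' bT D h] .
  define k where "k z = badd P' (snd z) (bneg P' (psi (fst z)))" for z
  have hk: "bimod_hom NP P' k" unfolding k_def NP_def
    using hom_plus[OF bP' pb_snd hom_uminus[OF bP' hom_comp[OF pb_fst psi]]] .
  have hpi: "bimod_hom P' Q (coset P' S)" unfolding Q_def using quot_hom[OF bP' S] .
  have hPhi: "bimod_hom NP Q (\<lambda>z. coset P' S (k z))" using hom_comp[OF hk hpi] .
  have surPhi: "(\<lambda>z. coset P' S (k z)) ` bcar NP = bcar Q"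
  proof
    show "(\<lambda>z. coset P' S (k z)) ` bcar NP \<subseteq> bcar Q" using hom_car[OF hPhi] by auto
    show "bcar Q \<subseteq> (\<lambda>z. coset P' S (k z)) ` bcar NP"
    proof
      fix X assume "X \<in> bcar Q"
      then obtain y where y: "y \<in> bcar P'" "X = coset P' S y" using quot_surj[OF bP' S] unfolding Q_def by auto
      obtain p where p: "p \<in> bcar P" "D p = h y" using hsub y(1) by (metis imageE subsetD imageI)
      have z: "(p, y) \<in> bcar NP" unfolding NP_def pb_def using p y by simp
      have q: "psi p \<in> bcar P'" using hom_car[OF psi p(1)] .
      have "badd P' (k (p,y)) (bneg P' y) = bneg P' (psi p)"
        unfolding k_def using y(1) q bm_comm[OF bP', of "badd P' y (bneg P' (psi p))" "bneg P' y"] bm_all[OF bP'] by simp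
      also have "\<dots> = psi (bneg P p)" using hom_neg[OF bP bP' psi p(1)] by simp
      also have "\<dots> \<in> S" unfolding S_def using bm_all[OF bP] p(1) by simp
      finally have "coset P' S (k (p,y)) = coset P' S y"
        using coset_eq_iff[OF bP' S, of "k (p,y)" y] hom_car[OF hk z] y(1) by simp
      thus "X \<in> (\<lambda>z. coset P' S (k z)) ` bcar NP" using z y(2) by (metis image_eqI)
    qed
  qed
  obtain s where s: "bimod_hom Q NP s" "\<forall>X\<in>bcar Q. coset P' S (k (s X)) = X"
    using proj_split[OF prQ bNP hPhi surPhi] by blast
  define w where "w y = badd P' y (bneg P' (k (s (coset P' S y))))" for y
  have hw: "bimod_hom P' P' w" unfolding w_def
    using hom_plus[OF bP' hom_id[OF bP'] hom_uminus[OF bP' hom_comp[OF hom_comp[OF hpi s(1)] hk]]] .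
  have wS: "w ` bcar P' \<subseteq> psi ` bcar P"
  proof
    fix z assume "z \<in> w ` bcar P'"
    then obtain y where y: "y \<in> bcar P'" "z = w y" by auto
    have X: "coset P' S y \<in> bcar Q" using hom_car[OF hpi y(1)] .
    have kin: "k (s (coset P' S y)) \<in> bcar P'" using hom_car[OF hk hom_car[OF s(1) X]] .
    have "coset P' S y = coset P' S (k (s (coset P' S y)))" using s(2) X by simp
    hence "w y \<in> S" unfolding w_def using coset_eq_iff[OF bP' S y(1) kin] by simp
    thus "z \<in> psi ` bcar P" using y(2) unfolding S_def by simp
  qed
  define f where "f y = inv_into (bcar P) psi (w y)" for y
  have hf: "bimod_hom P' P f" unfolding f_def using hom_inv[OF bP bP' bP' psi inj hw wS] .
  have "\<forall>x\<in>bcar P. f (psi x) = x"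
  proof
    fix x assume x: "x \<in> bcar P"
    have px: "psi x \<in> bcar P'" using hom_car[OF psi x] .
    have "coset P' S (psi x) = bzero Q"
      using quot_zero_iff[OF bP' S px] x unfolding Q_def S_def by simp
    hence "s (coset P' S (psi x)) = bzero NP" using hom_zero[OF bQ bNP s(1)] by simp
    hence "k (s (coset P' S (psi x))) = bzero P'"
      unfolding k_def NP_def pb_def using hom_zero[OF bP bP' psi] bm_all[OF bP'] by simp
    hence "w (psi x) = psi x" unfolding w_def using px bm_all[OF bP'] by simp
    thus "f (psi x) = x" unfolding f_def using inj x by (simp add: inv_into_f_f)
  qed
  moreover have "\<forall>y\<in>bcar P'. D (f y) = h y"
  proof
    fix y assume y: "y \<in> bcar P'"
    have X: "coset P' S y \<in> bcar Q" using hom_car[OF hpi y] .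
    define z where "z = s (coset P' S y)"
    have z: "z \<in> bcar NP" unfolding z_def using hom_car[OF s(1) X] .
    hence z': "fst z \<in> bcar P" "snd z \<in> bcar P'" "D (fst z) = h (snd z)" unfolding NP_def pb_def by auto
    have kin: "k z \<in> bcar P'" using hom_car[OF hk z] .
    have pz: "psi (fst z) \<in> bcar P'" using hom_car[OF psi z'(1)] .
    have "h (k z) = badd T (h (snd z)) (bneg T (h (psi (fst z))))"
      unfolding k_def using hom_add[OF h z'(2) bm_neg[OF bP' pz]] hom_neg[OF bP' bT h pz] by simp
    also have "\<dots> = badd T (h (snd z)) (bneg T (h (snd z)))" using hp z' by simp
    also have "\<dots> = bzero T" using hom_car[OF h z'(2)] bm_all[OF bT] by simp
    finally have hkz: "h (k z) = bzero T" .
    have fy: "f y \<in> bcar P" using hom_car[OF hf y] .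
    have "psi (f y) = w y" unfolding f_def using wS y by (meson image_subset_iff f_inv_into_f imageI)
    hence "D (f y) = h (w y)" using hp fy by metis
    also have "\<dots> = h y" unfolding w_def z_def[symmetric]
      using hom_add[OF h y] hom_neg[OF bP' bT h kin] hkz kin y bm_all[OF bP'] bm_all[OF bT] hom_car[OF h] by simp
    finally show "D (f y) = h y" .
  qed
  ultimately show ?thesis using hf by blast
qed


lemma reg_bimodule: "k_algebra alg \<Longrightarrow> bimodule alg (reg_bimod :: ('a::ring_1, 'a) bimod)"
  unfolding bimodule_def reg_bimod_def k_algebra_def
  by (simp add: algebra_simps)

lemma part1:
  fixes alg :: "'k::field \<Rightarrow> 'a::ring_1"
    and P :: "nat \<Rightarrow> ('a, 'm) bimod" and d :: "nat \<Rightarrow> 'm \<Rightarrow> 'm" and eps :: "'m \<Rightarrow> 'a"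
    and P' :: "nat \<Rightarrow> ('a, 'n) bimod" and d' :: "nat \<Rightarrow> 'n \<Rightarrow> 'n" and eps' :: "'n \<Rightarrow> 'a"
    and psi :: "nat \<Rightarrow> 'm \<Rightarrow> 'n"
  assumes alg: "k_algebra alg"
    and resP: "bimod_resolution alg P d eps"
    and resP': "bimod_resolution alg P' d' eps'"
    and psi: "chain_map_lifting_id P d eps P' d' eps' psi"
    and inj: "\<forall>n. inj_on (psi n) (bcar (P n))"
    and proj: "\<forall>n. projective_bimod alg (quot_bimod (P' n) (psi n ` bcar (P n)))"
  shows "\<exists>psi'. chain_map_lifting_id P' d' eps' P d eps psi'
                \<and> (\<forall>n. \<forall>x\<in>bcar (P n). psi' n (psi n x) = x)"
proof -
  have bP: "\<And>n. bimodule alg (P n)" and hd: "\<And>n. bimod_hom (P (Suc n)) (P n) (d n)"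
    and heps: "bimod_hom (P 0) reg_bimod eps" and seps: "eps ` bcar (P 0) = UNIV"
    and ex0: "{x \<in> bcar (P 0). eps x = 0} = d 0 ` bcar (P 1)"
    and exn: "\<And>n. {x \<in> bcar (P (Suc n)). d n x = bzero (P n)} = d (Suc n) ` bcar (P (Suc (Suc n)))"
    using resP unfolding bimod_resolution_def by auto
  have bP': "\<And>n. bimodule alg (P' n)" and hd': "\<And>n. bimod_hom (P' (Suc n)) (P' n) (d' n)"
    and heps': "bimod_hom (P' 0) reg_bimod eps'"
    and ex0': "{x \<in> bcar (P' 0). eps' x = 0} = d' 0 ` bcar (P' 1)"
    and exn': "\<And>n. {x \<in> bcar (P' (Suc n)). d' n x = bzero (P' n)} = d' (Suc n) ` bcar (P' (Suc (Suc n)))"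
    using resP' unfolding bimod_resolution_def by auto
  have hpsi: "\<And>n. bimod_hom (P n) (P' n) (psi n)"
    and cpsi: "\<And>n x. x \<in> bcar (P (Suc n)) \<Longrightarrow> d' n (psi (Suc n) x) = psi n (d n x)"
    and epsi: "\<And>x. x \<in> bcar (P 0) \<Longrightarrow> eps' (psi 0 x) = eps x"
    using psi unfolding chain_map_lifting_id_def by auto
  have bR: "bimodule alg (reg_bimod :: ('a,'a) bimod)" using reg_bimodule[OF alg] .
  define J where "J n f \<longleftrightarrow> bimod_hom (P' n) (P n) f \<and> (\<forall>x\<in>bcar (P n). f (psi n x) = x)
      \<and> f ` (d' n ` bcar (P' (Suc n))) \<subseteq> d n ` bcar (P (Suc n))" for n f
  obtain f0 where f0: "bimod_hom (P' 0) (P 0) f0" "\<forall>x\<in>bcar (P 0). f0 (psi 0 x) = x"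
      "\<forall>y\<in>bcar (P' 0). eps (f0 y) = eps' y"
    using ext_lemma[OF bP bP' bR hpsi inj[rule_format] proj[rule_format] heps heps'] epsi seps by auto
  have J0: "J 0 f0" unfolding J_def
  proof (intro conjI f0(1,2))
    show "f0 ` d' 0 ` bcar (P' (Suc 0)) \<subseteq> d 0 ` bcar (P (Suc 0))"
    proof
      fix x assume "x \<in> f0 ` d' 0 ` bcar (P' (Suc 0))"
      then obtain z where z: "z \<in> bcar (P' 1)" "x = f0 (d' 0 z)" by auto
      have y: "d' 0 z \<in> bcar (P' 0)" "eps' (d' 0 z) = 0" using ex0' z(1) by auto
      have "x \<in> bcar (P 0)" "eps x = 0" using z(2) hom_car[OF f0(1) y(1)] f0(3) y by auto
      thus "x \<in> d 0 ` bcar (P (Suc 0))" using ex0 by auto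
    qed
  qed
  have step: "\<exists>f'. J (Suc n) f' \<and> (\<forall>y\<in>bcar (P' (Suc n)). d n (f' y) = f (d' n y))" if Jf: "J n f" for n f
  proof -
    have hf: "bimod_hom (P' n) (P n) f" "\<forall>x\<in>bcar (P n). f (psi n x) = x"
      "f ` (d' n ` bcar (P' (Suc n))) \<subseteq> d n ` bcar (P (Suc n))" using Jf unfolding J_def by auto
    have hh: "bimod_hom (P' (Suc n)) (P n) (\<lambda>y. f (d' n y))" using hom_comp[OF hd' hf(1)] .
    have hp: "\<forall>x\<in>bcar (P (Suc n)). f (d' n (psi (Suc n) x)) = d n x"
      using cpsi hf(2) hom_car[OF hd] by simp
    have hs: "(\<lambda>y. f (d' n y)) ` bcar (P' (Suc n)) \<subseteq> d n ` bcar (P (Suc n))" using hf(3) by auto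
    obtain f' where f': "bimod_hom (P' (Suc n)) (P (Suc n)) f'" "\<forall>x\<in>bcar (P (Suc n)). f' (psi (Suc n) x) = x"
       "\<forall>y\<in>bcar (P' (Suc n)). d n (f' y) = f (d' n y)"
      using ext_lemma[OF bP[of "Suc n"] bP'[of "Suc n"] bP[of n] hpsi[of "Suc n"] inj[rule_format, of "Suc n"] proj[rule_format, of "Suc n"] hd[of n] hh hp hs] by blast
    have "J (Suc n) f'" unfolding J_def
    proof (intro conjI f'(1,2))
      show "f' ` d' (Suc n) ` bcar (P' (Suc (Suc n))) \<subseteq> d (Suc n) ` bcar (P (Suc (Suc n)))"
      proof
        fix x assume "x \<in> f' ` d' (Suc n) ` bcar (P' (Suc (Suc n)))"
        then obtain z where z: "z \<in> bcar (P' (Suc (Suc n)))" "x = f' (d' (Suc n) z)" by auto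
        have y: "d' (Suc n) z \<in> bcar (P' (Suc n))" "d' n (d' (Suc n) z) = bzero (P' n)" using exn'[of n] z(1) by auto
        have "x \<in> bcar (P (Suc n))" "d n x = bzero (P n)"
          using z(2) hom_car[OF f'(1) y(1)] f'(3) y hom_zero[OF bP' bP hf(1)] by auto
        thus "x \<in> d (Suc n) ` bcar (P (Suc (Suc n)))" using exn[of n] by auto
      qed
    qed
    thus ?thesis using f'(3) by blast
  qed
  define F where "F = rec_nat f0 (\<lambda>n f. SOME f'. J (Suc n) f' \<and> (\<forall>y\<in>bcar (P' (Suc n)). d n (f' y) = f (d' n y)))"
  have F0: "F 0 = f0" unfolding F_def by simp
  have FS: "F (Suc n) = (SOME f'. J (Suc n) f' \<and> (\<forall>y\<in>bcar (P' (Suc n)). d n (f' y) = F n (d' n y)))" for n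
    unfolding F_def by simp
  have FJ: "J n (F n)" for n
  proof (induction n)
    case 0 then show ?case using J0 F0 by simp
  next
    case (Suc n) then show ?case using someI_ex[OF step[OF Suc]] FS[of n] by simp
  qed
  have Fd: "\<forall>y\<in>bcar (P' (Suc n)). d n (F (Suc n) y) = F n (d' n y)" for n
    using someI_ex[OF step[OF FJ[of n]]] FS[of n] by simp
  have "chain_map_lifting_id P' d' eps' P d eps F"
    unfolding chain_map_lifting_id_def using FJ Fd f0(3) F0 unfolding J_def by auto
  moreover have "\<forall>n. \<forall>x\<in>bcar (P n). F n (psi n x) = x" using FJ unfolding J_def by auto
  ultimately show ?thesis by blast
qed


definition addG :: "('a, 'm) bimod \<Rightarrow> 'm monoid" where
  "addG M = \<lparr>carrier = bcar M, mult = badd M, one = bzero M\<rparr>"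

definition gsum :: "('a, 'm) bimod \<Rightarrow> ('i \<Rightarrow> 'm) \<Rightarrow> 'i set \<Rightarrow> 'm" where
  "gsum M f A = finprod (addG M) f A"

context fixes alg :: "'k::field \<Rightarrow> 'a::ring_1" and M :: "('a,'m) bimod"
  assumes bm: "bimodule alg M"
begin

lemma cmG: "comm_monoid (addG M)"
  unfolding addG_def
  apply (rule comm_monoidI)
  apply (simp_all add: bm_all[OF bm] bm_assoc[OF bm])
  by (simp add: bm_comm[OF bm])

lemma gsum_closed[simp]: "(\<And>j. j \<in> A \<Longrightarrow> f j \<in> bcar M) \<Longrightarrow> gsum M f A \<in> bcar M"
  unfolding gsum_def using comm_monoid.finprod_closed[OF cmG, of f A] by (auto simp: addG_def)

lemma gsum_empty[simp]: "gsum M f {} = bzero M"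
  unfolding gsum_def using comm_monoid.finprod_empty[OF cmG] by (simp add: addG_def)

lemma gsum_insert: "finite A \<Longrightarrow> a \<notin> A \<Longrightarrow> (\<And>j. j \<in> insert a A \<Longrightarrow> f j \<in> bcar M) \<Longrightarrow>
    gsum M f (insert a A) = badd M (f a) (gsum M f A)"
  unfolding gsum_def using comm_monoid.finprod_insert[OF cmG, of A a f] by (auto simp: addG_def)

lemma gsum_zero: "(\<And>j. j \<in> A \<Longrightarrow> f j = bzero M) \<Longrightarrow> gsum M f A = bzero M"
  unfolding gsum_def using comm_monoid.finprod_one_eqI[OF cmG, of A f] by (auto simp: addG_def)

lemma gsum_add: "(\<And>j. j \<in> A \<Longrightarrow> f j \<in> bcar M) \<Longrightarrow> (\<And>j. j \<in> A \<Longrightarrow> g j \<in> bcar M) \<Longrightarrow>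
   gsum M (\<lambda>j. badd M (f j) (g j)) A = badd M (gsum M f A) (gsum M g A)"
  unfolding gsum_def using comm_monoid.finprod_multf[OF cmG, of f A g] by (auto simp: addG_def)

lemma gsum_cong: "A = B \<Longrightarrow> (\<And>j. j \<in> B \<Longrightarrow> g j \<in> bcar M) \<Longrightarrow> (\<And>j. j \<in> B \<Longrightarrow> f j = g j) \<Longrightarrow>
   gsum M f A = gsum M g B"
  unfolding gsum_def using comm_monoid.finprod_cong'[OF cmG, of A B g f] by (auto simp: addG_def)

lemma gsum_mono: "finite B \<Longrightarrow> A \<subseteq> B \<Longrightarrow> (\<And>j. j \<in> B - A \<Longrightarrow> f j = bzero M) \<Longrightarrow>
   (\<And>j. j \<in> B \<Longrightarrow> f j \<in> bcar M) \<Longrightarrow> gsum M f A = gsum M f B"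
  unfolding gsum_def using comm_monoid.finprod_mono_neutral_cong_left[OF cmG, of B A f f] by (auto simp: addG_def)

lemma gsum_reindex: "(\<And>j. j \<in> h ` A \<Longrightarrow> f j \<in> bcar M) \<Longrightarrow> inj_on h A \<Longrightarrow>
   gsum M f (h ` A) = gsum M (\<lambda>x. f (h x)) A"
  unfolding gsum_def using comm_monoid.finprod_reindex[OF cmG, of f h A] by (auto simp: addG_def)

lemma gsum_single: assumes "finite A" "v \<in> bcar M"
  shows "gsum M (\<lambda>j. if j = k then v else bzero M) A = (if k \<in> A then v else bzero M)"
proof (cases "k \<in> A")
  case True
  have "gsum M (\<lambda>j. if j = k then v else bzero M) A = gsum M (\<lambda>j. if j = k then v else bzero M) {k}"
    using gsum_mono[of A "{k}" "\<lambda>j. if j = k then v else bzero M"] assms True bm_all[OF bm] by auto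
  also have "\<dots> = v" using gsum_insert[of "{}" k "\<lambda>j. if j = k then v else bzero M"] assms bm_all[OF bm] by simp
  finally show ?thesis using True by simp
next
  case False
  have "gsum M (\<lambda>j. if j = k then v else bzero M) A = bzero M" by (rule gsum_zero) (use False in auto)
  then show ?thesis using False by simp
qed

lemma lsum_gsum: "(\<And>j. j \<in> set xs \<Longrightarrow> f j \<in> bcar M) \<Longrightarrow> distinct xs \<Longrightarrow> lsum M (map f xs) = gsum M f (set xs)"
proof (induction xs)
  case Nil then show ?case by (simp add: lsum_def)
next
  case (Cons a xs)
  then show ?case using gsum_insert[of "set xs" a f] by (simp add: lsum_def)
qed

end

lemma gsum_additive:
  assumes bM: "bimodule alg M" and bN: "bimodule alg N"
    and phi_car: "\<And>x. x \<in> bcar M \<Longrightarrow> phi x \<in> bcar N"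
    and phi_add: "\<And>x y. x \<in> bcar M \<Longrightarrow> y \<in> bcar M \<Longrightarrow> phi (badd M x y) = badd N (phi x) (phi y)"
    and phi_zero: "phi (bzero M) = bzero N"
    and f: "\<And>j. j \<in> A \<Longrightarrow> f j \<in> bcar M"
  shows "phi (gsum M f A) = gsum N (\<lambda>j. phi (f j)) A"
  using f
proof (induction A rule: infinite_finite_induct)
  case (infinite A)
  have l: "gsum M f A = bzero M"
    using comm_monoid.finprod_infinite[OF cmG[OF bM] infinite(1), of f] unfolding gsum_def by (simp add: addG_def)
  have r: "gsum N (\<lambda>j. phi (f j)) A = bzero N"
    using comm_monoid.finprod_infinite[OF cmG[OF bN] infinite(1), of "\<lambda>j. phi (f j)"] unfolding gsum_def by (simp add: addG_def)
  show ?case using l r phi_zero by simp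
next
  case empty
  have "gsum M f {} = bzero M" "gsum N (\<lambda>j. phi (f j)) {} = bzero N"
    unfolding gsum_def using comm_monoid.finprod_empty[OF cmG[OF bM]] comm_monoid.finprod_empty[OF cmG[OF bN]]
    by (simp_all add: addG_def)
  then show ?case using phi_zero by simp
next
  case (insert a A)
  have "phi (gsum M f (insert a A)) = phi (badd M (f a) (gsum M f A))"
    using gsum_insert[OF bM insert(1,2)] insert(4) by simp
  also have "\<dots> = badd N (phi (f a)) (phi (gsum M f A))"
    using phi_add[of "f a" "gsum M f A"] insert(4) gsum_closed[OF bM, of A f] by simp
  also have "\<dots> = gsum N (\<lambda>j. phi (f j)) (insert a A)"
    using gsum_insert[OF bN insert(1,2), of "\<lambda>j. phi (f j)"] insert phi_car by simp
  finally show ?case .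
qed

lemma hom_gsum: "bimodule alg M \<Longrightarrow> bimodule alg N \<Longrightarrow> bimod_hom M N g \<Longrightarrow> (\<And>j. j \<in> A \<Longrightarrow> f j \<in> bcar M) \<Longrightarrow>
   g (gsum M f A) = gsum N (\<lambda>j. g (f j)) A"
  by (rule gsum_additive) (auto simp: hom_add hom_zero)

lemma lact_gsum: "bimodule alg M \<Longrightarrow> (\<And>j. j \<in> A \<Longrightarrow> f j \<in> bcar M) \<Longrightarrow>
   blact M a (gsum M f A) = gsum M (\<lambda>j. blact M a (f j)) A"
  by (rule gsum_additive) (auto simp: bm_lact_add)

lemma ract_gsum: "bimodule alg M \<Longrightarrow> (\<And>j. j \<in> A \<Longrightarrow> f j \<in> bcar M) \<Longrightarrow>
   bract M (gsum M f A) a = gsum M (\<lambda>j. bract M (f j) a) A"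
  by (rule gsum_additive) (auto simp: bm_ract_add)

lemma neg_gsum: "bimodule alg M \<Longrightarrow> (\<And>j. j \<in> A \<Longrightarrow> f j \<in> bcar M) \<Longrightarrow>
   bneg M (gsum M f A) = gsum M (\<lambda>j. bneg M (f j)) A"
  by (rule gsum_additive) (auto simp: bm_neg_add)


lemma int_bounded: "finite (B :: int set) \<Longrightarrow> \<exists>N. B \<subseteq> {-N..N}"
proof (induction B rule: finite_induct)
  case empty then show ?case by auto
next
  case (insert x B)
  then obtain N where "B \<subseteq> {-N..N}" by auto
  then have "insert x B \<subseteq> {-(max N \<bar>x\<bar>)..max N \<bar>x\<bar>}" by (force simp: subset_iff max_def abs_if)
  then show ?case by blast
qed

definition dec :: "('a, 'm) bimod \<Rightarrow> (int \<Rightarrow> 'm set) \<Rightarrow> 'm \<Rightarrow> (int \<Rightarrow> 'm) \<Rightarrow> bool" where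
  "dec M Mg x c \<longleftrightarrow> (\<forall>j. c j \<in> Mg j) \<and> (\<exists>N. (\<forall>j. j \<notin> {-N..N} \<longrightarrow> c j = bzero M) \<and> x = gsum M c {-N..N})"

definition gcomp :: "('a, 'm) bimod \<Rightarrow> (int \<Rightarrow> 'm set) \<Rightarrow> int \<Rightarrow> 'm \<Rightarrow> 'm" where
  "gcomp M Mg j x = (SOME c. dec M Mg x c) j"

definition gsupp :: "('a, 'm) bimod \<Rightarrow> (int \<Rightarrow> 'm set) \<Rightarrow> 'm \<Rightarrow> int set" where
  "gsupp M Mg x = {j. gcomp M Mg j x \<noteq> bzero M}"

lemma bm_sub_eq0: "bimodule alg M \<Longrightarrow> a \<in> bcar M \<Longrightarrow> b \<in> bcar M \<Longrightarrow> badd M a (bneg M b) = bzero M \<Longrightarrow> a = b"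
proof -
  assume bm: "bimodule alg M" and ab: "a \<in> bcar M" "b \<in> bcar M" "badd M a (bneg M b) = bzero M"
  have "bneg M b = bneg M a" using bm_neg_unique[OF bm, of a "bneg M b"] ab bm_all[OF bm] by simp
  hence "bneg M (bneg M b) = bneg M (bneg M a)" by simp
  thus "a = b" using ab bm_all[OF bm] by simp
qed

context fixes alg :: "'k::field \<Rightarrow> 'a::ring_1" and Ag :: "nat \<Rightarrow> 'a set" and M :: "('a,'m) bimod" and Mg
  assumes bm: "bimodule alg M" and gr: "graded_bimod Ag M Mg"
begin

lemma gr_sub: "x \<in> Mg j \<Longrightarrow> x \<in> bcar M" using gr unfolding graded_bimod_def by blast
lemma gr_zero: "bzero M \<in> Mg j" using gr unfolding graded_bimod_def by blast
lemma gr_add: "x \<in> Mg j \<Longrightarrow> y \<in> Mg j \<Longrightarrow> badd M x y \<in> Mg j" using gr unfolding graded_bimod_def by blast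
lemma gr_neg: "x \<in> Mg j \<Longrightarrow> bneg M x \<in> Mg j" using gr unfolding graded_bimod_def by blast
lemma gr_lact: "a \<in> Ag i \<Longrightarrow> x \<in> Mg j \<Longrightarrow> blact M a x \<in> Mg (int i + j)" using gr unfolding graded_bimod_def by blast
lemma gr_ract: "a \<in> Ag i \<Longrightarrow> x \<in> Mg j \<Longrightarrow> bract M x a \<in> Mg (j + int i)" using gr unfolding graded_bimod_def by blast
lemma gr_ex: "x \<in> bcar M \<Longrightarrow> \<exists>N f. (\<forall>j. f j \<in> Mg j) \<and> x = lsum M (map f [-N..N])"
  using gr unfolding graded_bimod_def by blast
lemma gr_uniq: "(\<forall>j. f j \<in> Mg j) \<Longrightarrow> lsum M (map f [-N..N]) = bzero M \<Longrightarrow> j \<in> {-N..N} \<Longrightarrow> f j = bzero M"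
  using gr unfolding graded_bimod_def by blast

lemma dec_car: "dec M Mg x c \<Longrightarrow> x \<in> bcar M"
  unfolding dec_def using gsum_closed[OF bm] gr_sub by metis

lemma dec_intro: assumes c: "\<And>j. c j \<in> Mg j" and B: "finite B" and z: "\<And>j. j \<notin> B \<Longrightarrow> c j = bzero M"
  and x: "x = gsum M c B"
  shows "dec M Mg x c"
proof -
  obtain N where N: "B \<subseteq> {-N..N}" using int_bounded[OF B] by blast
  have cc: "\<And>j. c j \<in> bcar M" using c gr_sub by blast
  have "gsum M c B = gsum M c {-N..N}" by (rule gsum_mono[OF bm]) (use N z cc in auto)
  thus ?thesis unfolding dec_def using c x z N by blast
qed

lemma dec_sum: assumes d: "dec M Mg x c" and B: "finite B" and z: "\<And>j. j \<notin> B \<Longrightarrow> c j = bzero M"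
  shows "x = gsum M c B"
proof -
  obtain N where N: "\<And>j. j \<notin> {-N..N} \<Longrightarrow> c j = bzero M" "x = gsum M c {-N..N}" and c: "\<And>j. c j \<in> Mg j"
    using d unfolding dec_def by blast
  have cc: "\<And>j. c j \<in> bcar M" using c gr_sub by blast
  have "gsum M c {-N..N} = gsum M c ({-N..N} \<union> B)" by (rule gsum_mono[OF bm]) (use B N cc in auto)
  also have "\<dots> = gsum M c B" by (rule gsum_mono[OF bm, symmetric]) (use B z cc in auto)
  finally show ?thesis using N by simp
qed

lemma dec_exists: assumes x: "x \<in> bcar M" shows "\<exists>c. dec M Mg x c"
proof -
  obtain N f where f: "\<And>j. f j \<in> Mg j" "x = lsum M (map f [-N..N])" using gr_ex[OF x] by blast
  define c where "c j = (if j \<in> {-N..N} then f j else bzero M)" for j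
  have fc: "\<And>j. f j \<in> bcar M" using f gr_sub by blast
  have "lsum M (map f [-N..N]) = gsum M f (set [-N..N])" by (rule lsum_gsum[OF bm]) (use fc in auto)
  hence "x = gsum M f {-N..N}" using f by simp
  also have "\<dots> = gsum M c {-N..N}" by (rule gsum_cong[OF bm]) (use fc c_def in auto)
  finally have xc: "x = gsum M c {-N..N}" .
  have "dec M Mg x c" by (rule dec_intro[of c "{-N..N}"]) (use f gr_zero c_def xc in auto)
  thus ?thesis by blast
qed

lemma dec_unique: assumes d1: "dec M Mg x c" and d2: "dec M Mg x c'" shows "c j = c' j"
proof -
  obtain N1 where N1: "\<And>j. j \<notin> {-N1..N1} \<Longrightarrow> c j = bzero M" and c: "\<And>j. c j \<in> Mg j"
    using d1 unfolding dec_def by blast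
  obtain N2 where N2: "\<And>j. j \<notin> {-N2..N2} \<Longrightarrow> c' j = bzero M" and c': "\<And>j. c' j \<in> Mg j"
    using d2 unfolding dec_def by blast
  define N where "N = max N1 N2"
  have z1: "c j = bzero M" if "j \<notin> {-N..N}" for j
  proof - have "j \<notin> {-N1..N1}" using that unfolding N_def by (auto simp: max_def split: if_splits)
    thus ?thesis using N1 by blast qed
  have z2: "c' j = bzero M" if "j \<notin> {-N..N}" for j
  proof - have "j \<notin> {-N2..N2}" using that unfolding N_def by (auto simp: max_def split: if_splits)
    thus ?thesis using N2 by blast qed
  have x1: "x = gsum M c {-N..N}" by (rule dec_sum[OF d1]) (use z1 in auto)
  have x2: "x = gsum M c' {-N..N}" by (rule dec_sum[OF d2]) (use z2 in auto)
  have cc: "\<And>j. c j \<in> bcar M" "\<And>j. c' j \<in> bcar M" using c c' gr_sub by blast+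
  have xM: "x \<in> bcar M" using dec_car[OF d1] .
  define f where "f j = badd M (c j) (bneg M (c' j))" for j
  have fg: "\<And>j. f j \<in> Mg j" unfolding f_def using c c' gr_add gr_neg by blast
  have fc: "\<And>j. f j \<in> bcar M" using fg gr_sub by blast
  have "lsum M (map f [-N..N]) = gsum M f (set [-N..N])" by (rule lsum_gsum[OF bm]) (use fc in auto)
  hence "lsum M (map f [-N..N]) = gsum M f {-N..N}" by simp
  also have "\<dots> = badd M (gsum M c {-N..N}) (gsum M (\<lambda>j. bneg M (c' j)) {-N..N})"
    unfolding f_def by (rule gsum_add[OF bm]) (use cc bm_all[OF bm] in auto)
  also have "\<dots> = badd M x (bneg M x)"
  proof -
    have "bneg M (gsum M c' {-N..N}) = gsum M (\<lambda>j. bneg M (c' j)) {-N..N}" by (rule neg_gsum[OF bm]) (use cc in auto)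
    thus ?thesis using x1 x2 by simp
  qed
  also have "\<dots> = bzero M" using xM bm_all[OF bm] by simp
  finally have l0: "lsum M (map f [-N..N]) = bzero M" .
  show ?thesis
  proof (cases "j \<in> {-N..N}")
    case True
    then have "f j = bzero M" using gr_uniq[OF _ l0] fg by blast
    thus ?thesis unfolding f_def using bm_sub_eq0[OF bm] cc by blast
  next
    case False then show ?thesis using z1 z2 by simp
  qed
qed

lemma gcomp_dec: "x \<in> bcar M \<Longrightarrow> dec M Mg x (\<lambda>j. gcomp M Mg j x)"
  unfolding gcomp_def using someI_ex[OF dec_exists] by simp

lemma gcomp_eq: "dec M Mg x c \<Longrightarrow> gcomp M Mg j x = c j"
  using dec_unique gcomp_dec dec_car by metis

lemma gcomp_in: "x \<in> bcar M \<Longrightarrow> gcomp M Mg j x \<in> Mg j"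
  using gcomp_dec unfolding dec_def by blast

lemma gcomp_car: "x \<in> bcar M \<Longrightarrow> gcomp M Mg j x \<in> bcar M"
  using gcomp_in gr_sub by blast

lemma gsupp_fin: "x \<in> bcar M \<Longrightarrow> finite (gsupp M Mg x)"
proof -
  assume x: "x \<in> bcar M"
  obtain N where "\<And>j. j \<notin> {-N..N} \<Longrightarrow> gcomp M Mg j x = bzero M" using gcomp_dec[OF x] unfolding dec_def by blast
  hence "gsupp M Mg x \<subseteq> {-N..N}" unfolding gsupp_def by blast
  thus ?thesis using finite_subset by blast
qed

lemma gcomp_sum: "x \<in> bcar M \<Longrightarrow> finite B \<Longrightarrow> gsupp M Mg x \<subseteq> B \<Longrightarrow> x = gsum M (\<lambda>j. gcomp M Mg j x) B"
  using dec_sum[OF gcomp_dec] unfolding gsupp_def by blast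

lemma gcomp_add: assumes x: "x \<in> bcar M" and y: "y \<in> bcar M"
  shows "gcomp M Mg j (badd M x y) = badd M (gcomp M Mg j x) (gcomp M Mg j y)"
proof -
  define B where "B = gsupp M Mg x \<union> gsupp M Mg y"
  have B: "finite B" unfolding B_def using gsupp_fin x y by simp
  have "badd M x y = badd M (gsum M (\<lambda>j. gcomp M Mg j x) B) (gsum M (\<lambda>j. gcomp M Mg j y) B)"
    using gcomp_sum[OF x B] gcomp_sum[OF y B] unfolding B_def by auto
  also have "\<dots> = gsum M (\<lambda>j. badd M (gcomp M Mg j x) (gcomp M Mg j y)) B"
    by (rule gsum_add[OF bm, symmetric]) (use gcomp_car x y in auto)
  finally have "dec M Mg (badd M x y) (\<lambda>j. badd M (gcomp M Mg j x) (gcomp M Mg j y))"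
    using dec_intro[OF _ B] gr_add gcomp_in x y bm_all[OF bm] gcomp_car unfolding B_def gsupp_def by auto
  thus ?thesis using gcomp_eq by blast
qed

lemma gcomp_homog: assumes y: "y \<in> Mg k" shows "gcomp M Mg j y = (if j = k then y else bzero M)"
proof -
  have "gsum M (\<lambda>j. if j = k then y else bzero M) {k} = y"
    using gsum_single[OF bm, of "{k}" y k] y gr_sub by simp
  hence "dec M Mg y (\<lambda>j. if j = k then y else bzero M)"
    using dec_intro[of "\<lambda>j. if j = k then y else bzero M" "{k}" y] y gr_zero by auto
  thus ?thesis using gcomp_eq by blast
qed

lemma gcomp_zero[simp]: "gcomp M Mg j (bzero M) = bzero M"
  using gcomp_homog[OF gr_zero[of 0]] by simp

lemma gcomp_gsum: "(\<And>i. i \<in> A \<Longrightarrow> y i \<in> bcar M) \<Longrightarrow>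
   gcomp M Mg j (gsum M y A) = gsum M (\<lambda>i. gcomp M Mg j (y i)) A"
  by (rule gsum_additive[OF bm bm]) (auto simp: gcomp_car gcomp_add)

lemma gcomp_lact: assumes a: "a \<in> Ag i" and x: "x \<in> bcar M"
  shows "gcomp M Mg l (blact M a x) = blact M a (gcomp M Mg (l - int i) x)"
proof -
  define B where "B = gsupp M Mg x"
  have B: "finite B" unfolding B_def using gsupp_fin x by simp
  have "blact M a x = blact M a (gsum M (\<lambda>j. gcomp M Mg j x) B)"
    using gcomp_sum[OF x B] unfolding B_def by simp
  also have "\<dots> = gsum M (\<lambda>j. blact M a (gcomp M Mg j x)) B"
    by (rule lact_gsum[OF bm]) (use gcomp_car x in auto)
  finally have "gcomp M Mg l (blact M a x) = gcomp M Mg l (gsum M (\<lambda>j. blact M a (gcomp M Mg j x)) B)" by simp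
  also have "\<dots> = gsum M (\<lambda>j. gcomp M Mg l (blact M a (gcomp M Mg j x))) B"
    by (rule gcomp_gsum) (use gcomp_car x bm_all[OF bm] in auto)
  also have "\<dots> = gsum M (\<lambda>j. if j = l - int i then blact M a (gcomp M Mg (l - int i) x) else bzero M) B"
    apply (rule gsum_cong[OF bm])
    using gcomp_homog[OF gr_lact[OF a gcomp_in[OF x]]] gcomp_car[OF x] bm_all[OF bm] by auto
  also have "\<dots> = (if l - int i \<in> B then blact M a (gcomp M Mg (l - int i) x) else bzero M)"
    using gsum_single[OF bm B] gcomp_car[OF x] bm_all[OF bm] by simp
  also have "\<dots> = blact M a (gcomp M Mg (l - int i) x)"
    unfolding B_def gsupp_def using bm_all[OF bm] by auto
  finally show ?thesis .
qed

lemma gcomp_ract: assumes a: "a \<in> Ag i" and x: "x \<in> bcar M"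
  shows "gcomp M Mg l (bract M x a) = bract M (gcomp M Mg (l - int i) x) a"
proof -
  define B where "B = gsupp M Mg x"
  have B: "finite B" unfolding B_def using gsupp_fin x by simp
  have "bract M x a = bract M (gsum M (\<lambda>j. gcomp M Mg j x) B) a"
    using gcomp_sum[OF x B] unfolding B_def by simp
  also have "\<dots> = gsum M (\<lambda>j. bract M (gcomp M Mg j x) a) B"
    by (rule ract_gsum[OF bm]) (use gcomp_car x in auto)
  finally have "gcomp M Mg l (bract M x a) = gcomp M Mg l (gsum M (\<lambda>j. bract M (gcomp M Mg j x) a) B)" by simp
  also have "\<dots> = gsum M (\<lambda>j. gcomp M Mg l (bract M (gcomp M Mg j x) a)) B"
    by (rule gcomp_gsum) (use gcomp_car x bm_all[OF bm] in auto)
  also have "\<dots> = gsum M (\<lambda>j. if j = l - int i then bract M (gcomp M Mg (l - int i) x) a else bzero M) B"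
    apply (rule gsum_cong[OF bm])
    using gcomp_homog[OF gr_ract[OF a gcomp_in[OF x]]] gcomp_car[OF x] bm_all[OF bm] by auto
  also have "\<dots> = (if l - int i \<in> B then bract M (gcomp M Mg (l - int i) x) a else bzero M)"
    using gsum_single[OF bm B] gcomp_car[OF x] bm_all[OF bm] by simp
  also have "\<dots> = bract M (gcomp M Mg (l - int i) x) a"
    unfolding B_def gsupp_def using bm_all[OF bm] by auto
  finally show ?thesis .
qed

end


lemma gcomp_hom:
  assumes bM: "bimodule alg M" and grM: "graded_bimod Ag M Mg"
    and bN: "bimodule alg N" and grN: "graded_bimod Ag N Ng"
    and g: "bimod_hom M N g" and gm: "graded_map Mg Ng g" and x: "x \<in> bcar M"
  shows "gcomp N Ng j (g x) = g (gcomp M Mg j x)"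
proof -
  define B where "B = gsupp M Mg x"
  have B: "finite B" unfolding B_def using gsupp_fin[OF bM grM x] .
  have "g x = g (gsum M (\<lambda>j. gcomp M Mg j x) B)" using gcomp_sum[OF bM grM x B] unfolding B_def by simp
  also have "\<dots> = gsum N (\<lambda>j. g (gcomp M Mg j x)) B"
    by (rule hom_gsum[OF bM bN g]) (use gcomp_car[OF bM grM x] in auto)
  finally have gx: "g x = gsum N (\<lambda>j. g (gcomp M Mg j x)) B" .
  have "dec N Ng (g x) (\<lambda>j. g (gcomp M Mg j x))"
  proof (rule dec_intro[OF bN grN _ B _ gx])
    show "g (gcomp M Mg j x) \<in> Ng j" for j using gm gcomp_in[OF bM grM x] unfolding graded_map_def by blast
    show "g (gcomp M Mg j x) = bzero N" if "j \<notin> B" for j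
      using that hom_zero[OF bM bN g] unfolding B_def gsupp_def by auto
  qed
  thus ?thesis using gcomp_eq[OF bN grN] by blast
qed

lemma gsupp_zero: "bimodule alg M \<Longrightarrow> graded_bimod Ag M Mg \<Longrightarrow> gsupp M Mg (bzero M) = {}"
  unfolding gsupp_def using gcomp_zero by auto

definition deg0 :: "('a, 'm) bimod \<Rightarrow> (int \<Rightarrow> 'm set) \<Rightarrow> ('a, 'n) bimod \<Rightarrow> (int \<Rightarrow> 'n set) \<Rightarrow> ('m \<Rightarrow> 'n) \<Rightarrow> 'm \<Rightarrow> 'n" where
  "deg0 M Mg N Ng f x = gsum N (\<lambda>j. gcomp N Ng j (f (gcomp M Mg j x))) (gsupp M Mg x)"

context fixes alg :: "'k::field \<Rightarrow> 'a::ring_1" and Ag :: "nat \<Rightarrow> 'a set"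
  and M :: "('a,'m) bimod" and Mg and N :: "('a,'n) bimod" and Ng
  assumes bM: "bimodule alg M" and grM: "graded_bimod Ag M Mg"
    and bN: "bimodule alg N" and grN: "graded_bimod Ag N Ng"
begin

lemma deg0_super: assumes f: "bimod_hom M N f" and x: "x \<in> bcar M" and B: "finite B" and sub: "gsupp M Mg x \<subseteq> B"
  shows "deg0 M Mg N Ng f x = gsum N (\<lambda>j. gcomp N Ng j (f (gcomp M Mg j x))) B"
  unfolding deg0_def
proof (rule gsum_mono[OF bN B sub])
  show "gcomp N Ng j (f (gcomp M Mg j x)) = bzero N" if "j \<in> B - gsupp M Mg x" for j
    using that hom_zero[OF bM bN f] gcomp_zero[OF bN grN] unfolding gsupp_def by auto
  show "gcomp N Ng j (f (gcomp M Mg j x)) \<in> bcar N" for j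
    using gcomp_car[OF bN grN] hom_car[OF f] gcomp_car[OF bM grM x] by blast
qed

lemma deg0_car: assumes x: "x \<in> bcar M" and f: "bimod_hom M N f" shows "deg0 M Mg N Ng f x \<in> bcar N"
  unfolding deg0_def by (rule gsum_closed[OF bN]) (use gcomp_car[OF bN grN] hom_car[OF f] gcomp_car[OF bM grM x] in blast)

lemma deg0_zero: "deg0 M Mg N Ng f (bzero M) = bzero N"
  unfolding deg0_def using gsupp_zero[OF bM grM] gsum_empty[OF bN] by simp

lemma deg0_add: assumes f: "bimod_hom M N f" and x: "x \<in> bcar M" and y: "y \<in> bcar M"
  shows "deg0 M Mg N Ng f (badd M x y) = badd N (deg0 M Mg N Ng f x) (deg0 M Mg N Ng f y)"
proof -
  define B where "B = gsupp M Mg x \<union> gsupp M Mg y \<union> gsupp M Mg (badd M x y)"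
  have xy: "badd M x y \<in> bcar M" using bm_add[OF bM x y] .
  have B: "finite B" unfolding B_def using gsupp_fin[OF bM grM] x y xy by simp
  have cx: "\<And>j. gcomp N Ng j (f (gcomp M Mg j x)) \<in> bcar N"
    using gcomp_car[OF bN grN] hom_car[OF f] gcomp_car[OF bM grM x] by blast
  have cy: "\<And>j. gcomp N Ng j (f (gcomp M Mg j y)) \<in> bcar N"
    using gcomp_car[OF bN grN] hom_car[OF f] gcomp_car[OF bM grM y] by blast
  have "deg0 M Mg N Ng f (badd M x y) = gsum N (\<lambda>j. gcomp N Ng j (f (gcomp M Mg j (badd M x y)))) B"
    by (rule deg0_super[OF f xy B]) (auto simp: B_def)
  also have "\<dots> = gsum N (\<lambda>j. badd N (gcomp N Ng j (f (gcomp M Mg j x))) (gcomp N Ng j (f (gcomp M Mg j y)))) B"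
    by (rule gsum_cong[OF bN]) (use cx cy gcomp_add[OF bM grM x y] hom_add[OF f] gcomp_car[OF bM grM] x y
        gcomp_add[OF bN grN] hom_car[OF f] bm_add[OF bN] in auto)
  also have "\<dots> = badd N (gsum N (\<lambda>j. gcomp N Ng j (f (gcomp M Mg j x))) B) (gsum N (\<lambda>j. gcomp N Ng j (f (gcomp M Mg j y))) B)"
    by (rule gsum_add[OF bN]) (use cx cy in auto)
  also have "\<dots> = badd N (deg0 M Mg N Ng f x) (deg0 M Mg N Ng f y)"
  proof -
    have "deg0 M Mg N Ng f x = gsum N (\<lambda>j. gcomp N Ng j (f (gcomp M Mg j x))) B"
      by (rule deg0_super[OF f x B]) (auto simp: B_def)
    moreover have "deg0 M Mg N Ng f y = gsum N (\<lambda>j. gcomp N Ng j (f (gcomp M Mg j y))) B"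
      by (rule deg0_super[OF f y B]) (auto simp: B_def)
    ultimately show ?thesis by simp
  qed
  finally show ?thesis .
qed

lemma deg0_gsum: assumes f: "bimod_hom M N f" and y: "\<And>i. i \<in> I \<Longrightarrow> y i \<in> bcar M"
  shows "deg0 M Mg N Ng f (gsum M y I) = gsum N (\<lambda>i. deg0 M Mg N Ng f (y i)) I"
proof (rule gsum_additive[OF bM bN])
  show "\<And>x. x \<in> bcar M \<Longrightarrow> deg0 M Mg N Ng f x \<in> bcar N" using deg0_car[OF _ f] .
  show "\<And>x ya. x \<in> bcar M \<Longrightarrow> ya \<in> bcar M \<Longrightarrow> deg0 M Mg N Ng f (badd M x ya) = badd N (deg0 M Mg N Ng f x) (deg0 M Mg N Ng f ya)"
    using deg0_add[OF f] .
  show "deg0 M Mg N Ng f (bzero M) = bzero N" using deg0_zero .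
  show "\<And>j. j \<in> I \<Longrightarrow> y j \<in> bcar M" using y .
qed

lemma deg0_lact_h: assumes f: "bimod_hom M N f" and a: "a \<in> Ag i" and x: "x \<in> bcar M"
  shows "deg0 M Mg N Ng f (blact M a x) = blact N a (deg0 M Mg N Ng f x)"
proof -
  define A where "A = gsupp M Mg x"
  have A: "finite A" unfolding A_def using gsupp_fin[OF bM grM x] .
  define h where "h j = j + int i" for j
  define B where "B = h ` A"
  have B: "finite B" unfolding B_def using A by simp
  have ax: "blact M a x \<in> bcar M" using bm_lact[OF bM x] .
  have sub: "gsupp M Mg (blact M a x) \<subseteq> B"
  proof
    fix l assume "l \<in> gsupp M Mg (blact M a x)"
    hence "blact M a (gcomp M Mg (l - int i) x) \<noteq> bzero M" unfolding gsupp_def using gcomp_lact[OF bM grM a x] by simp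
    hence "l - int i \<in> A" unfolding A_def gsupp_def using bm_lact_zero[OF bM] by auto
    moreover have "l = h (l - int i)" unfolding h_def by simp
    ultimately show "l \<in> B" unfolding B_def by blast
  qed
  have cc: "\<And>j. gcomp N Ng j (f (gcomp M Mg j x)) \<in> bcar N"
    using gcomp_car[OF bN grN] hom_car[OF f] gcomp_car[OF bM grM x] by blast
  have "deg0 M Mg N Ng f (blact M a x) = gsum N (\<lambda>l. gcomp N Ng l (f (gcomp M Mg l (blact M a x)))) B"
    by (rule deg0_super[OF f ax B sub])
  also have "\<dots> = gsum N (\<lambda>l. blact N a (gcomp N Ng (l - int i) (f (gcomp M Mg (l - int i) x)))) B"
    by (rule gsum_cong[OF bN]) (use gcomp_lact[OF bM grM a x] hom_lact[OF f] gcomp_car[OF bM grM x]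
        gcomp_lact[OF bN grN a] hom_car[OF f] cc bm_lact[OF bN] in auto)
  also have "\<dots> = gsum N (\<lambda>j. blact N a (gcomp N Ng j (f (gcomp M Mg j x)))) A"
    unfolding B_def by (subst gsum_reindex[OF bN]) (use cc bm_lact[OF bN] in \<open>auto simp: h_def inj_on_def\<close>)
  also have "\<dots> = blact N a (gsum N (\<lambda>j. gcomp N Ng j (f (gcomp M Mg j x))) A)"
    by (rule lact_gsum[OF bN, symmetric]) (use cc in auto)
  also have "\<dots> = blact N a (deg0 M Mg N Ng f x)" unfolding deg0_def A_def ..
  finally show ?thesis .
qed

lemma deg0_ract_h: assumes f: "bimod_hom M N f" and a: "a \<in> Ag i" and x: "x \<in> bcar M"
  shows "deg0 M Mg N Ng f (bract M x a) = bract N (deg0 M Mg N Ng f x) a"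
proof -
  define A where "A = gsupp M Mg x"
  have A: "finite A" unfolding A_def using gsupp_fin[OF bM grM x] .
  define h where "h j = j + int i" for j
  define B where "B = h ` A"
  have B: "finite B" unfolding B_def using A by simp
  have ax: "bract M x a \<in> bcar M" using bm_ract[OF bM x] .
  have sub: "gsupp M Mg (bract M x a) \<subseteq> B"
  proof
    fix l assume "l \<in> gsupp M Mg (bract M x a)"
    hence "bract M (gcomp M Mg (l - int i) x) a \<noteq> bzero M" unfolding gsupp_def using gcomp_ract[OF bM grM a x] by simp
    hence "l - int i \<in> A" unfolding A_def gsupp_def using bm_ract_zero[OF bM] by auto
    moreover have "l = h (l - int i)" unfolding h_def by simp
    ultimately show "l \<in> B" unfolding B_def by blast
  qed
  have cc: "\<And>j. gcomp N Ng j (f (gcomp M Mg j x)) \<in> bcar N"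
    using gcomp_car[OF bN grN] hom_car[OF f] gcomp_car[OF bM grM x] by blast
  have "deg0 M Mg N Ng f (bract M x a) = gsum N (\<lambda>l. gcomp N Ng l (f (gcomp M Mg l (bract M x a)))) B"
    by (rule deg0_super[OF f ax B sub])
  also have "\<dots> = gsum N (\<lambda>l. bract N (gcomp N Ng (l - int i) (f (gcomp M Mg (l - int i) x))) a) B"
    by (rule gsum_cong[OF bN]) (use gcomp_ract[OF bM grM a x] hom_ract[OF f] gcomp_car[OF bM grM x]
        gcomp_ract[OF bN grN a] hom_car[OF f] cc bm_ract[OF bN] in auto)
  also have "\<dots> = gsum N (\<lambda>j. bract N (gcomp N Ng j (f (gcomp M Mg j x))) a) A"
    unfolding B_def by (subst gsum_reindex[OF bN]) (use cc bm_ract[OF bN] in \<open>auto simp: h_def inj_on_def\<close>)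
  also have "\<dots> = bract N (gsum N (\<lambda>j. gcomp N Ng j (f (gcomp M Mg j x))) A) a"
    by (rule ract_gsum[OF bN, symmetric]) (use cc in auto)
  also have "\<dots> = bract N (deg0 M Mg N Ng f x) a" unfolding deg0_def A_def ..
  finally show ?thesis .
qed

end


lemma lact_sum_ring: assumes bM: "bimodule alg M" and x: "x \<in> bcar M" and I: "finite I"
  shows "blact M (sum g I) x = gsum M (\<lambda>i. blact M (g i) x) I"
  using I
proof (induction I rule: finite_induct)
  case empty then show ?case using bM x gsum_empty[OF bM] bm_lact_0[OF bM] by simp
next
  case (insert i I)
  have "blact M (sum g (insert i I)) x = badd M (blact M (g i) x) (blact M (sum g I) x)"
    using insert(1,2) bm_lact_addr[OF bM x] by simp
  also have "\<dots> = gsum M (\<lambda>i. blact M (g i) x) (insert i I)"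
    using insert gsum_insert[OF bM insert(1,2), of "\<lambda>i. blact M (g i) x"] bm_lact[OF bM x] by simp
  finally show ?case .
qed

lemma ract_sum_ring: assumes bM: "bimodule alg M" and x: "x \<in> bcar M" and I: "finite I"
  shows "bract M x (sum g I) = gsum M (\<lambda>i. bract M x (g i)) I"
  using I
proof (induction I rule: finite_induct)
  case empty then show ?case using bM x gsum_empty[OF bM] bm_ract_0[OF bM] by simp
next
  case (insert i I)
  have "bract M x (sum g (insert i I)) = badd M (bract M x (g i)) (bract M x (sum g I))"
    using insert(1,2) bm_ract_addr[OF bM x] by simp
  also have "\<dots> = gsum M (\<lambda>i. bract M x (g i)) (insert i I)"
    using insert gsum_insert[OF bM insert(1,2), of "\<lambda>i. bract M x (g i)"] bm_ract[OF bM x] by simp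
  finally show ?case .
qed

lemma ga_dec: "graded_algebra alg Ag \<Longrightarrow> \<forall>a. \<exists>N f. (\<forall>i. f i \<in> Ag i) \<and> a = (\<Sum>i<N. f i)"
  unfolding graded_algebra_def by (elim conjE) assumption

context fixes alg :: "'k::field \<Rightarrow> 'a::ring_1" and Ag :: "nat \<Rightarrow> 'a set"
  and M :: "('a,'m) bimod" and Mg and N :: "('a,'n) bimod" and Ng
  assumes bM: "bimodule alg M" and grM: "graded_bimod Ag M Mg"
    and bN: "bimodule alg N" and grN: "graded_bimod Ag N Ng"
begin

lemma deg0_hom: assumes ga: "graded_algebra alg Ag" and f: "bimod_hom M N f"
  shows "bimod_hom M N (deg0 M Mg N Ng f)"
  unfolding bimod_hom_def
proof (intro conjI ballI allI)
  fix x assume x: "x \<in> bcar M"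
  show "deg0 M Mg N Ng f x \<in> bcar N" using deg0_car[OF bM grM bN grN x f] .
  fix a
  obtain n g where g: "\<And>i. g i \<in> Ag i" "a = (\<Sum>i<n. g i)" using ga_dec[OF ga, rule_format, of a] by blast
  have d0: "deg0 M Mg N Ng f x \<in> bcar N" using deg0_car[OF bM grM bN grN x f] .
  have e1: "blact M a x = gsum M (\<lambda>i. blact M (g i) x) {..<n}"
    using lact_sum_ring[OF bM x, of "{..<n}" g] g(2) by simp
  have "deg0 M Mg N Ng f (blact M a x) = deg0 M Mg N Ng f (gsum M (\<lambda>i. blact M (g i) x) {..<n})"
    by (simp only: e1)
  also have "\<dots> = gsum N (\<lambda>i. deg0 M Mg N Ng f (blact M (g i) x)) {..<n}"
    by (rule deg0_gsum[OF bM grM bN grN f]) (use bm_lact[OF bM x] in auto)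
  also have "\<dots> = gsum N (\<lambda>i. blact N (g i) (deg0 M Mg N Ng f x)) {..<n}"
    by (rule gsum_cong[OF bN refl]) (simp_all add: deg0_lact_h[OF bM grM bN grN f g(1) x] bm_lact[OF bN d0])
  also have "\<dots> = blact N a (deg0 M Mg N Ng f x)" using lact_sum_ring[OF bN d0, of "{..<n}" g] g(2) by simp
  finally show "deg0 M Mg N Ng f (blact M a x) = blact N a (deg0 M Mg N Ng f x)" .
  have e2: "bract M x a = gsum M (\<lambda>i. bract M x (g i)) {..<n}"
    using ract_sum_ring[OF bM x, of "{..<n}" g] g(2) by simp
  have "deg0 M Mg N Ng f (bract M x a) = deg0 M Mg N Ng f (gsum M (\<lambda>i. bract M x (g i)) {..<n})"
    by (simp only: e2)
  also have "\<dots> = gsum N (\<lambda>i. deg0 M Mg N Ng f (bract M x (g i))) {..<n}"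
    by (rule deg0_gsum[OF bM grM bN grN f]) (use bm_ract[OF bM x] in auto)
  also have "\<dots> = gsum N (\<lambda>i. bract N (deg0 M Mg N Ng f x) (g i)) {..<n}"
    by (rule gsum_cong[OF bN refl]) (simp_all add: deg0_ract_h[OF bM grM bN grN f g(1) x] bm_ract[OF bN d0])
  also have "\<dots> = bract N (deg0 M Mg N Ng f x) a" using ract_sum_ring[OF bN d0, of "{..<n}" g] g(2) by simp
  finally show "deg0 M Mg N Ng f (bract M x a) = bract N (deg0 M Mg N Ng f x) a" .
next
  fix x y assume x: "x \<in> bcar M" and y: "y \<in> bcar M"
  show "deg0 M Mg N Ng f (badd M x y) = badd N (deg0 M Mg N Ng f x) (deg0 M Mg N Ng f y)"
    using deg0_add[OF bM grM bN grN f x y] .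
qed

lemma deg0_self: assumes h: "bimod_hom M N h" and gm: "graded_map Mg Ng h" and x: "x \<in> bcar M"
  shows "deg0 M Mg N Ng h x = h x"
proof -
  define S where "S = gsupp M Mg x"
  have S: "finite S" unfolding S_def using gsupp_fin[OF bM grM x] .
  have "deg0 M Mg N Ng h x = gsum N (\<lambda>j. gcomp N Ng j (h (gcomp M Mg j x))) S" unfolding deg0_def S_def ..
  also have "\<dots> = gsum N (\<lambda>j. h (gcomp M Mg j x)) S"
  proof (rule gsum_cong[OF bN refl])
    fix j
    show "h (gcomp M Mg j x) \<in> bcar N" using hom_car[OF h gcomp_car[OF bM grM x]] .
    have "gcomp N Ng j (h (gcomp M Mg j x)) = h (gcomp M Mg j (gcomp M Mg j x))"
      using gcomp_hom[OF bM grM bN grN h gm gcomp_car[OF bM grM x]] .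
    also have "\<dots> = h (gcomp M Mg j x)" using gcomp_homog[OF bM grM gcomp_in[OF bM grM x]] by simp
    finally show "gcomp N Ng j (h (gcomp M Mg j x)) = h (gcomp M Mg j x)" .
  qed
  also have "\<dots> = h (gsum M (\<lambda>j. gcomp M Mg j x) S)"
    by (rule hom_gsum[OF bM bN h, symmetric]) (use gcomp_car[OF bM grM x] in auto)
  also have "\<dots> = h x" using gcomp_sum[OF bM grM x S] unfolding S_def by simp
  finally show ?thesis .
qed

lemma deg0_cong: assumes e: "\<And>y. y \<in> bcar M \<Longrightarrow> f y = f' y" and x: "x \<in> bcar M"
  shows "deg0 M Mg N Ng f x = deg0 M Mg N Ng f' x"
  unfolding deg0_def using e gcomp_car[OF bM grM x] by simp

lemma deg0_graded: assumes f: "bimod_hom M N f" shows "graded_map Mg Ng (deg0 M Mg N Ng f)"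
  unfolding graded_map_def
proof (intro allI subsetI)
  fix j z assume "z \<in> deg0 M Mg N Ng f ` Mg j"
  then obtain x where x: "x \<in> Mg j" "z = deg0 M Mg N Ng f x" by auto
  have xc: "x \<in> bcar M" using gr_sub[OF bM grM x(1)] .
  have sub: "gsupp M Mg x \<subseteq> {j}" unfolding gsupp_def using gcomp_homog[OF bM grM x(1)] by auto
  have c: "gcomp N Ng j (f (gcomp M Mg j x)) \<in> bcar N" using gcomp_car[OF bN grN hom_car[OF f gcomp_car[OF bM grM xc]]] .
  have "z = gsum N (\<lambda>l. gcomp N Ng l (f (gcomp M Mg l x))) {j}"
    using deg0_super[OF bM grM bN grN f xc _ sub] x(2) by simp
  also have "\<dots> = gcomp N Ng j (f (gcomp M Mg j x))"
  proof -
    have e: "gsum N (\<lambda>l. gcomp N Ng l (f (gcomp M Mg l x))) {} = bzero N" by (rule gsum_empty[OF bN])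
    have "gsum N (\<lambda>l. gcomp N Ng l (f (gcomp M Mg l x))) {j} = badd N (gcomp N Ng j (f (gcomp M Mg j x))) (gsum N (\<lambda>l. gcomp N Ng l (f (gcomp M Mg l x))) {})"
      by (rule gsum_insert[OF bN]) (use c in auto)
    thus ?thesis using e c bm_all[OF bN] by simp
  qed
  finally show "z \<in> Ng j" using gcomp_in[OF bN grN hom_car[OF f gcomp_car[OF bM grM xc]]] by simp
qed

end

lemma deg0_post:
  assumes bM: "bimodule alg M" and grM: "graded_bimod Ag M Mg"
    and bN: "bimodule alg N" and grN: "graded_bimod Ag N Ng"
    and bK: "bimodule alg K" and grK: "graded_bimod Ag K Kg"
    and f: "bimod_hom M N f" and g: "bimod_hom N K g" and gm: "graded_map Ng Kg g" and x: "x \<in> bcar M"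
  shows "g (deg0 M Mg N Ng f x) = deg0 M Mg K Kg (\<lambda>y. g (f y)) x"
proof -
  have c: "\<And>j. gcomp N Ng j (f (gcomp M Mg j x)) \<in> bcar N"
    using gcomp_car[OF bN grN hom_car[OF f gcomp_car[OF bM grM x]]] .
  have "g (deg0 M Mg N Ng f x) = gsum K (\<lambda>j. g (gcomp N Ng j (f (gcomp M Mg j x)))) (gsupp M Mg x)"
    unfolding deg0_def by (rule hom_gsum[OF bN bK g]) (use c in auto)
  also have "\<dots> = gsum K (\<lambda>j. gcomp K Kg j (g (f (gcomp M Mg j x)))) (gsupp M Mg x)"
    by (rule gsum_cong[OF bK refl]) (use gcomp_hom[OF bN grN bK grK g gm] hom_car[OF g] hom_car[OF f]
       gcomp_car[OF bM grM x] gcomp_car[OF bK grK] gcomp_car[OF bN grN] in auto)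
  finally show ?thesis unfolding deg0_def .
qed

lemma deg0_pre:
  assumes bM: "bimodule alg M" and grM: "graded_bimod Ag M Mg"
    and bN: "bimodule alg N" and grN: "graded_bimod Ag N Ng"
    and bK: "bimodule alg K" and grK: "graded_bimod Ag K Kg"
    and f: "bimod_hom M N f" and k: "bimod_hom K M k" and km: "graded_map Kg Mg k" and x: "x \<in> bcar K"
  shows "deg0 M Mg N Ng f (k x) = deg0 K Kg N Ng (\<lambda>y. f (k y)) x"
proof -
  define B where "B = gsupp K Kg x \<union> gsupp M Mg (k x)"
  have kx: "k x \<in> bcar M" using hom_car[OF k x] .
  have B: "finite B" unfolding B_def using gsupp_fin[OF bK grK x] gsupp_fin[OF bM grM kx] by simp
  have "deg0 M Mg N Ng f (k x) = gsum N (\<lambda>j. gcomp N Ng j (f (gcomp M Mg j (k x)))) B"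
    by (rule deg0_super[OF bM grM bN grN f kx B]) (auto simp: B_def)
  also have "\<dots> = gsum N (\<lambda>j. gcomp N Ng j (f (k (gcomp K Kg j x)))) B"
    by (rule gsum_cong[OF bN refl]) (use gcomp_hom[OF bK grK bM grM k km x] gcomp_car[OF bN grN]
       hom_car[OF f] hom_car[OF k] gcomp_car[OF bK grK x] in auto)
  also have "\<dots> = deg0 K Kg N Ng (\<lambda>y. f (k y)) x"
    by (rule deg0_super[OF bK grK bN grN hom_comp[OF k f] x B, symmetric]) (auto simp: B_def)
  finally show ?thesis .
qed


lemma lsum_reg: "lsum reg_bimod xs = sum_list xs"
  by (induction xs) (simp_all add: lsum_def reg_bimod_def)

lemma ga_uniq: "graded_algebra alg Ag \<Longrightarrow> \<forall>N f. (\<forall>i. f i \<in> Ag i) \<and> (\<Sum>i<N. f i) = 0 \<longrightarrow> (\<forall>i<N. f i = 0)"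
  unfolding graded_algebra_def by (elim conjE) assumption
lemma ga_closed: "graded_algebra alg Ag \<Longrightarrow> \<forall>i. 0 \<in> Ag i \<and> (\<forall>a\<in>Ag i. \<forall>b\<in>Ag i. a + b \<in> Ag i) \<and> (\<forall>a\<in>Ag i. - a \<in> Ag i)
          \<and> (\<forall>c. \<forall>a\<in>Ag i. alg c * a \<in> Ag i)"
  unfolding graded_algebra_def by (elim conjE) assumption
lemma ga_mult: "graded_algebra alg Ag \<Longrightarrow> \<forall>i j. \<forall>a\<in>Ag i. \<forall>b\<in>Ag j. a * b \<in> Ag (i + j)"
  unfolding graded_algebra_def by (elim conjE) assumption

lemma int_grading_zero: "graded_algebra alg Ag \<Longrightarrow> 0 \<in> int_grading Ag j"
  using ga_closed unfolding int_grading_def by auto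

lemma sum_int_part: fixes f :: "int \<Rightarrow> 'a::comm_monoid_add"
  assumes z: "\<And>j. j < 0 \<Longrightarrow> f j = 0" and zn: "\<And>j. j \<ge> int n \<Longrightarrow> j \<le> N \<Longrightarrow> f j = 0" and n0: "\<And>i. i < n \<Longrightarrow> int i > N \<Longrightarrow> f (int i) = 0"
  shows "sum f {-N..N} = (\<Sum>i<n. f (int i))"
proof -
  have "sum f {-N..N} = sum f (int ` {..<n})"
  proof (rule sum.mono_neutral_cong)
    show "finite {-N..N}" by simp
    show "finite (int ` {..<n})" by simp
    show "f i = 0" if "i \<in> int ` {..<n} - {-N..N}" for i
      using that n0 z by auto
    show "f i = 0" if "i \<in> {-N..N} - int ` {..<n}" for i
    proof -
      have "i < 0 \<or> i \<ge> int n"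
      proof (rule ccontr)
        assume "\<not> (i < 0 \<or> i \<ge> int n)"
        hence "i = int (nat i)" "nat i < n" by auto
        thus False using that by (metis DiffD2 imageI lessThan_iff)
      qed
      thus ?thesis using z zn that by auto
    qed
  qed simp
  also have "\<dots> = (\<Sum>i<n. f (int i))" by (simp add: sum.reindex)
  finally show ?thesis .
qed

lemma reg_graded: assumes ga: "graded_algebra alg Ag"
  shows "graded_bimod Ag reg_bimod (int_grading Ag)"
proof -
  note cl = ga_closed[OF ga, rule_format]
  have h1: "\<forall>j. int_grading Ag j \<subseteq> bcar reg_bimod \<and> bzero reg_bimod \<in> int_grading Ag j
          \<and> (\<forall>x\<in>int_grading Ag j. \<forall>y\<in>int_grading Ag j. badd reg_bimod x y \<in> int_grading Ag j)
          \<and> (\<forall>x\<in>int_grading Ag j. bneg reg_bimod x \<in> int_grading Ag j)"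
    using cl by (simp add: reg_bimod_def int_grading_def)
  have h2: "\<forall>i j. \<forall>a\<in>Ag i. \<forall>x\<in>int_grading Ag j. blact reg_bimod a x \<in> int_grading Ag (int i + j)
       \<and> bract reg_bimod x a \<in> int_grading Ag (j + int i)"
  proof (intro allI ballI)
    fix i j a x assume a: "a \<in> Ag i" and x: "x \<in> int_grading Ag j"
    show "blact reg_bimod a x \<in> int_grading Ag (int i + j) \<and> bract reg_bimod x a \<in> int_grading Ag (j + int i)"
    proof (cases "0 \<le> j")
      case True
      then have xg: "x \<in> Ag (nat j)" using x unfolding int_grading_def by simp
      have "a * x \<in> Ag (i + nat j)" "x * a \<in> Ag (nat j + i)" using ga_mult[OF ga] a xg by blast+
      moreover have "nat (int i + j) = i + nat j" "nat (j + int i) = nat j + i" using True by auto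
      ultimately show ?thesis using True unfolding int_grading_def reg_bimod_def by simp
    next
      case False
      then have "x = 0" using x unfolding int_grading_def by simp
      then show ?thesis using int_grading_zero[OF ga] unfolding reg_bimod_def by simp
    qed
  qed
  have h3: "\<forall>x\<in>bcar reg_bimod. \<exists>N f. (\<forall>j. f j \<in> int_grading Ag j) \<and> x = lsum reg_bimod (map f [-N..N])"
  proof
    fix x
    obtain n g where g: "\<And>i. g i \<in> Ag i" "x = (\<Sum>i<n. g i)" using ga_dec[OF ga, rule_format, of x] by blast
    define f where "f j = (if 0 \<le> j \<and> j < int n then g (nat j) else 0)" for j
    have fg: "f j \<in> int_grading Ag j" for j
      using g(1) int_grading_zero[OF ga, of j] unfolding f_def by (auto simp: int_grading_def)
    have "lsum reg_bimod (map f [-int n..int n]) = sum f {-int n..int n}"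
      by (simp add: lsum_reg sum_list_distinct_conv_sum_set)
    also have "\<dots> = (\<Sum>i<n. f (int i))" by (rule sum_int_part) (auto simp: f_def)
    also have "\<dots> = x" using g(2) by (simp add: f_def)
    finally show "\<exists>N f. (\<forall>j. f j \<in> int_grading Ag j) \<and> x = lsum reg_bimod (map f [-N..N])"
      using fg by metis
  qed
  have h4: "\<forall>N f. (\<forall>j. f j \<in> int_grading Ag j) \<and> lsum reg_bimod (map f [-N..N]) = bzero reg_bimod
          \<longrightarrow> (\<forall>j\<in>{-N..N}. f j = bzero reg_bimod)"
  proof (intro allI impI ballI)
    fix N f j assume H: "(\<forall>j. f j \<in> int_grading Ag j) \<and> lsum reg_bimod (map f [-N..N]) = bzero reg_bimod"
      and j: "j \<in> {-N..N}"
    have z: "f j = 0" if "j < 0" for j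
    proof -
      have "f j \<in> int_grading Ag j" using H by blast
      thus ?thesis using that unfolding int_grading_def by simp
    qed
    show "f j = bzero reg_bimod"
    proof (cases "j < 0")
      case True then show ?thesis using z by (simp add: reg_bimod_def)
    next
      case False
      define n where "n = Suc (nat N)"
      have l: "lsum reg_bimod (map f [-N..N]) = bzero reg_bimod" using H by blast
      have s0: "sum f {-N..N} = 0" using l unfolding lsum_reg by (simp add: sum_list_distinct_conv_sum_set reg_bimod_def)
      have "sum f {-N..N} = (\<Sum>i<n. f (int i))"
        by (rule sum_int_part) (use z False j in \<open>auto simp: n_def\<close>)
      hence s1: "(\<Sum>i<n. f (int i)) = 0" using s0 by simp
      have gi: "\<forall>i. f (int i) \<in> Ag i"
      proof
        fix i :: nat have "f (int i) \<in> int_grading Ag (int i)" using H by blast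
        thus "f (int i) \<in> Ag i" unfolding int_grading_def by simp
      qed
      have "nat j < n" using False j unfolding n_def by auto
      hence "f (int (nat j)) = 0" using ga_uniq[OF ga, rule_format, of "\<lambda>i. f (int i)" n] gi s1 by blast
      thus ?thesis using False by (simp add: reg_bimod_def)
    qed
  qed
  show ?thesis unfolding graded_bimod_def by (intro conjI h1 h2 h3 h4)
qed


theorem lemma9p1:
  fixes alg :: "'k::field \<Rightarrow> 'a::ring_1"
    and P :: "nat \<Rightarrow> ('a, 'm) bimod" and d :: "nat \<Rightarrow> 'm \<Rightarrow> 'm" and eps :: "'m \<Rightarrow> 'a"
    and P' :: "nat \<Rightarrow> ('a, 'n) bimod" and d' :: "nat \<Rightarrow> 'n \<Rightarrow> 'n" and eps' :: "'n \<Rightarrow> 'a"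
    and psi :: "nat \<Rightarrow> 'm \<Rightarrow> 'n"
  assumes alg: "k_algebra alg"
    and resP: "bimod_resolution alg P d eps"
    and resP': "bimod_resolution alg P' d' eps'"
    and psi: "chain_map_lifting_id P d eps P' d' eps' psi"
    and inj: "\<forall>n. inj_on (psi n) (bcar (P n))"
    and proj: "\<forall>n. projective_bimod alg (quot_bimod (P' n) (psi n ` bcar (P n)))"
  shows "(\<exists>psi'. chain_map_lifting_id P' d' eps' P d eps psi'
                \<and> (\<forall>n. \<forall>x\<in>bcar (P n). psi' n (psi n x) = x))
    \<and> (\<forall>Ag Pg P'g. graded_algebra alg Ag
            \<and> graded_resolution Ag P d eps Pg \<and> graded_resolution Ag P' d' eps' P'g
            \<and> (\<forall>n. graded_map (Pg n) (P'g n) (psi n))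
          \<longrightarrow> (\<exists>psi'. chain_map_lifting_id P' d' eps' P d eps psi'
                \<and> (\<forall>n. \<forall>x\<in>bcar (P n). psi' n (psi n x) = x)
                \<and> (\<forall>n. graded_map (P'g n) (Pg n) (psi' n))))"
proof -
  obtain F where F: "chain_map_lifting_id P' d' eps' P d eps F" "\<forall>n. \<forall>x\<in>bcar (P n). F n (psi n x) = x"
    using part1[OF alg resP resP' psi inj proj] by blast
  have bP: "\<And>n. bimodule alg (P n)" and hd: "\<And>n. bimod_hom (P (Suc n)) (P n) (d n)"
    and heps: "bimod_hom (P 0) reg_bimod eps"
    using resP unfolding bimod_resolution_def by auto
  have bP': "\<And>n. bimodule alg (P' n)" and hd': "\<And>n. bimod_hom (P' (Suc n)) (P' n) (d' n)"
    and heps': "bimod_hom (P' 0) reg_bimod eps'"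
    using resP' unfolding bimod_resolution_def by auto
  have hpsi: "\<And>n. bimod_hom (P n) (P' n) (psi n)"
    using psi unfolding chain_map_lifting_id_def by auto
  have hF: "\<And>n. bimod_hom (P' n) (P n) (F n)"
    and cF: "\<And>n x. x \<in> bcar (P' (Suc n)) \<Longrightarrow> d n (F (Suc n) x) = F n (d' n x)"
    and eF: "\<And>x. x \<in> bcar (P' 0) \<Longrightarrow> eps (F 0 x) = eps' x"
    using F(1) unfolding chain_map_lifting_id_def by auto
  have bR: "bimodule alg (reg_bimod :: ('a,'a) bimod)" using reg_bimodule[OF alg] .
  show ?thesis
  proof (intro conjI allI impI)
    show "\<exists>psi'. chain_map_lifting_id P' d' eps' P d eps psi' \<and> (\<forall>n. \<forall>x\<in>bcar (P n). psi' n (psi n x) = x)"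
      using F by blast
    fix Ag Pg P'g
    assume H: "graded_algebra alg Ag \<and> graded_resolution Ag P d eps Pg \<and> graded_resolution Ag P' d' eps' P'g
            \<and> (\<forall>n. graded_map (Pg n) (P'g n) (psi n))"
    have ga: "graded_algebra alg Ag" using H by blast
    have grP: "\<And>n. graded_bimod Ag (P n) (Pg n)" and gd: "\<And>n. graded_map (Pg (Suc n)) (Pg n) (d n)"
      and geps: "graded_map (Pg 0) (int_grading Ag) eps"
      using H unfolding graded_resolution_def by auto
    have grP': "\<And>n. graded_bimod Ag (P' n) (P'g n)" and gd': "\<And>n. graded_map (P'g (Suc n)) (P'g n) (d' n)"
      and geps': "graded_map (P'g 0) (int_grading Ag) eps'"
      using H unfolding graded_resolution_def by auto
    have gpsi: "\<And>n. graded_map (Pg n) (P'g n) (psi n)" using H by blast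
    have grR: "graded_bimod Ag reg_bimod (int_grading Ag)" using reg_graded[OF ga] .
    define G where "G n = deg0 (P' n) (P'g n) (P n) (Pg n) (F n)" for n
    have hG: "bimod_hom (P' n) (P n) (G n)" for n
      unfolding G_def using deg0_hom[OF bP' grP' bP grP ga hF] .
    have cG: "d n (G (Suc n) x) = G n (d' n x)" if x: "x \<in> bcar (P' (Suc n))" for n x
    proof -
      have "d n (G (Suc n) x) = deg0 (P' (Suc n)) (P'g (Suc n)) (P n) (Pg n) (\<lambda>y. d n (F (Suc n) y)) x"
        unfolding G_def using deg0_post[OF bP' grP' bP grP bP grP hF hd gd x] .
      also have "\<dots> = deg0 (P' (Suc n)) (P'g (Suc n)) (P n) (Pg n) (\<lambda>y. F n (d' n y)) x"
        using deg0_cong[OF bP' grP' bP grP _ x, of "\<lambda>y. d n (F (Suc n) y)" "\<lambda>y. F n (d' n y)"] cF by simp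
      also have "\<dots> = G n (d' n x)"
        unfolding G_def using deg0_pre[OF bP' grP' bP grP bP' grP' hF hd' gd' x] by simp
      finally show ?thesis .
    qed
    have eG: "eps (G 0 x) = eps' x" if x: "x \<in> bcar (P' 0)" for x
    proof -
      have "eps (G 0 x) = deg0 (P' 0) (P'g 0) reg_bimod (int_grading Ag) (\<lambda>y. eps (F 0 y)) x"
        unfolding G_def using deg0_post[OF bP' grP' bP grP bR grR hF heps geps x] .
      also have "\<dots> = deg0 (P' 0) (P'g 0) reg_bimod (int_grading Ag) eps' x"
        using deg0_cong[OF bP' grP' bR grR _ x, of "\<lambda>y. eps (F 0 y)" eps'] eF by simp
      also have "\<dots> = eps' x" using deg0_self[OF bP' grP' bR grR heps' geps' x] .
      finally show ?thesis .
    qed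
    have pG: "G n (psi n x) = x" if x: "x \<in> bcar (P n)" for n x
    proof -
      have "G n (psi n x) = deg0 (P n) (Pg n) (P n) (Pg n) (\<lambda>y. F n (psi n y)) x"
        unfolding G_def using deg0_pre[OF bP' grP' bP grP bP grP hF hpsi gpsi x] .
      also have "\<dots> = deg0 (P n) (Pg n) (P n) (Pg n) (\<lambda>y. y) x"
        using deg0_cong[OF bP grP bP grP _ x, of "\<lambda>y. F n (psi n y)" "\<lambda>y. y"] F(2) by simp
      also have "\<dots> = x" using deg0_self[OF bP grP bP grP hom_id[OF bP] _ x] unfolding graded_map_def by simp
      finally show ?thesis .
    qed
    have gG: "graded_map (P'g n) (Pg n) (G n)" for n
      unfolding G_def using deg0_graded[OF bP' grP' bP grP hF] .
    have "chain_map_lifting_id P' d' eps' P d eps G"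
      unfolding chain_map_lifting_id_def using hG cG eG by blast
    thus "\<exists>psi'. chain_map_lifting_id P' d' eps' P d eps psi' \<and> (\<forall>n. \<forall>x\<in>bcar (P n). psi' n (psi n x) = x)
            \<and> (\<forall>n. graded_map (P'g n) (Pg n) (psi' n))"
      using pG gG by blast
  qed
qed


end
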